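(* Let $L$ be a finite-dimensional Lie algebra over a field $F$. (1) If $S$ is a subalgebra with $\phi(L)\leq S\leq L$, then $\mathrm{nil}(S/\phi(L))=\mathrm{nil}(S)/\phi(L)$, where $\mathrm{nil}(S/\phi(L))$ is taken with respect to the Lie algebra $L/\phi(L)$. (2) If every two-generated proper subalgebra of $L$ is triangulable on $L$, then every two-generated proper subalgebra of $L/\phi(L)$ is triangulable on $L/\phi(L)$.
   Context: The Frattini ideal $\phi(L)$ is the largest ideal of $L$ contained in the intersection of all maximal subalgebras of $L$. For a Lie algebra $L$ and a subalgebra $S$, $\mathrm{nil}(S)$ denotes the unique maximal ideal of $S$ consisting of elements $x$ with $\mathrm{ad}_L x$ nilpotent. A subalgebra $S$ of $L$ is triangulable on $L$ if $\mathrm{ad}_L S$ is a Lie algebra of linear transformations of $L$ simultaneously triangulable over the algebraic closure of $F$ (equivalently, every element of $S^2$ acts nilpotently on $L$). A subalgebra is two-generated if it is generated as a Lie algebra by two elements. *)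

theory Defs
  imports Main
begin

text \<open>Using an explicit carrier lets us form
  quotient algebras (whose elements are cosets, of type 'a set).\<close>

record ('f, 'a) liealg =
  lcarr  :: "'a set"
  ladd   :: "'a \<Rightarrow> 'a \<Rightarrow> 'a"
  lzero  :: 'a
  lsmult :: "'f \<Rightarrow> 'a \<Rightarrow> 'a"
  lbr    :: "'a \<Rightarrow> 'a \<Rightarrow> 'a"

definition lie_algebra :: "('f::field, 'a, 'b) liealg_scheme \<Rightarrow> bool" where
  "lie_algebra L \<longleftrightarrow>
     lzero L \<in> lcarr L \<and>
     (\<forall>x\<in>lcarr L. \<forall>y\<in>lcarr L. ladd L x y \<in> lcarr L) \<and>
     (\<forall>c. \<forall>x\<in>lcarr L. lsmult L c x \<in> lcarr L) \<and>
     (\<forall>x\<in>lcarr L. \<forall>y\<in>lcarr L. lbr L x y \<in> lcarr L) \<and>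
     (\<forall>x\<in>lcarr L. \<forall>y\<in>lcarr L. \<forall>z\<in>lcarr L.
        ladd L (ladd L x y) z = ladd L x (ladd L y z)) \<and>
     (\<forall>x\<in>lcarr L. \<forall>y\<in>lcarr L. ladd L x y = ladd L y x) \<and>
     (\<forall>x\<in>lcarr L. ladd L (lzero L) x = x) \<and>
     (\<forall>x\<in>lcarr L. ladd L x (lsmult L (-1) x) = lzero L) \<and>
     (\<forall>x\<in>lcarr L. lsmult L 1 x = x) \<and>
     (\<forall>a b. \<forall>x\<in>lcarr L. lsmult L a (lsmult L b x) = lsmult L (a * b) x) \<and>
     (\<forall>a b. \<forall>x\<in>lcarr L. lsmult L (a + b) x = ladd L (lsmult L a x) (lsmult L b x)) \<and>
     (\<forall>a. \<forall>x\<in>lcarr L. \<forall>y\<in>lcarr L.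
        lsmult L a (ladd L x y) = ladd L (lsmult L a x) (lsmult L a y)) \<and>
     (\<forall>x\<in>lcarr L. \<forall>y\<in>lcarr L. \<forall>z\<in>lcarr L.
        lbr L (ladd L x y) z = ladd L (lbr L x z) (lbr L y z)) \<and>
     (\<forall>x\<in>lcarr L. \<forall>y\<in>lcarr L. \<forall>z\<in>lcarr L.
        lbr L x (ladd L y z) = ladd L (lbr L x y) (lbr L x z)) \<and>
     (\<forall>a. \<forall>x\<in>lcarr L. \<forall>y\<in>lcarr L.
        lbr L (lsmult L a x) y = lsmult L a (lbr L x y) \<and>
        lbr L x (lsmult L a y) = lsmult L a (lbr L x y)) \<and>
     (\<forall>x\<in>lcarr L. lbr L x x = lzero L) \<and>
     (\<forall>x\<in>lcarr L. \<forall>y\<in>lcarr L. \<forall>z\<in>lcarr L.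
        ladd L (lbr L x (lbr L y z)) (ladd L (lbr L y (lbr L z x)) (lbr L z (lbr L x y)))
          = lzero L)"

fun lincomb :: "('f, 'a, 'b) liealg_scheme \<Rightarrow> ('f \<times> 'a) list \<Rightarrow> 'a" where
  "lincomb L [] = lzero L"
| "lincomb L ((c, v) # xs) = ladd L (lsmult L c v) (lincomb L xs)"

definition lspan :: "('f, 'a, 'b) liealg_scheme \<Rightarrow> 'a set \<Rightarrow> 'a set" where
  "lspan L X = {lincomb L xs | xs. set (map snd xs) \<subseteq> X}"

definition finite_dim :: "('f, 'a, 'b) liealg_scheme \<Rightarrow> bool" where
  "finite_dim L \<longleftrightarrow> (\<exists>B. finite B \<and> B \<subseteq> lcarr L \<and> lspan L B = lcarr L)"

definition lsubspace :: "('f, 'a, 'b) liealg_scheme \<Rightarrow> 'a set \<Rightarrow> bool" where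
  "lsubspace L S \<longleftrightarrow> S \<subseteq> lcarr L \<and> lzero L \<in> S \<and>
     (\<forall>x\<in>S. \<forall>y\<in>S. ladd L x y \<in> S) \<and> (\<forall>c. \<forall>x\<in>S. lsmult L c x \<in> S)"

definition subalgebra :: "('f, 'a, 'b) liealg_scheme \<Rightarrow> 'a set \<Rightarrow> bool" where
  "subalgebra L S \<longleftrightarrow> lsubspace L S \<and> (\<forall>x\<in>S. \<forall>y\<in>S. lbr L x y \<in> S)"

definition ideal_in :: "('f, 'a, 'b) liealg_scheme \<Rightarrow> 'a set \<Rightarrow> 'a set \<Rightarrow> bool" where
  "ideal_in L S J \<longleftrightarrow> lsubspace L J \<and> J \<subseteq> S \<and> (\<forall>s\<in>S. \<forall>j\<in>J. lbr L s j \<in> J)"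

definition lideal :: "('f, 'a, 'b) liealg_scheme \<Rightarrow> 'a set \<Rightarrow> bool" where
  "lideal L I \<longleftrightarrow> ideal_in L (lcarr L) I"

definition maximal_subalgebra :: "('f, 'a, 'b) liealg_scheme \<Rightarrow> 'a set \<Rightarrow> bool" where
  "maximal_subalgebra L M \<longleftrightarrow> subalgebra L M \<and> M \<noteq> lcarr L \<and>
     (\<forall>N. subalgebra L N \<and> M \<subseteq> N \<longrightarrow> N = M \<or> N = lcarr L)"

definition frattini :: "('f, 'a, 'b) liealg_scheme \<Rightarrow> 'a set" where
  "frattini L = (THE I. lideal L I \<and> I \<subseteq> lcarr L \<inter> \<Inter>{M. maximal_subalgebra L M} \<and>
      (\<forall>J. lideal L J \<and> J \<subseteq> lcarr L \<inter> \<Inter>{M. maximal_subalgebra L M} \<longrightarrow> J \<subseteq> I))"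

definition coset :: "('f, 'a, 'b) liealg_scheme \<Rightarrow> 'a set \<Rightarrow> 'a \<Rightarrow> 'a set" where
  "coset L I x = {ladd L x i | i. i \<in> I}"

definition quotient :: "('f, 'a, 'b) liealg_scheme \<Rightarrow> 'a set \<Rightarrow> ('f, 'a set) liealg" where
  "quotient L I =
    \<lparr> lcarr = coset L I ` lcarr L,
      ladd = (\<lambda>P Q. {ladd L p q | p q. p \<in> P \<and> q \<in> Q}),
      lzero = I,
      lsmult = (\<lambda>c P. {ladd L (lsmult L c p) i | p i. p \<in> P \<and> i \<in> I}),
      lbr = (\<lambda>P Q. {ladd L (lbr L p q) i | p q i. p \<in> P \<and> q \<in> Q \<and> i \<in> I}) \<rparr>"

definition qimg :: "('f, 'a, 'b) liealg_scheme \<Rightarrow> 'a set \<Rightarrow> 'a set \<Rightarrow> 'a set set" where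
  "qimg L I S = coset L I ` S"

definition ad_nilpotent :: "('f, 'a, 'b) liealg_scheme \<Rightarrow> 'a \<Rightarrow> bool" where
  "ad_nilpotent L x \<longleftrightarrow> (\<exists>n. \<forall>y\<in>lcarr L. (lbr L x ^^ n) y = lzero L)"

definition nil :: "('f, 'a, 'b) liealg_scheme \<Rightarrow> 'a set \<Rightarrow> 'a set" where
  "nil L S = (THE J. ideal_in L S J \<and> (\<forall>x\<in>J. ad_nilpotent L x) \<and>
      (\<forall>K. ideal_in L S K \<and> (\<forall>x\<in>K. ad_nilpotent L x) \<longrightarrow> K \<subseteq> J))"

definition triangulable :: "('f, 'a, 'b) liealg_scheme \<Rightarrow> 'a set \<Rightarrow> bool" where
  "triangulable L S \<longleftrightarrow>
     (\<forall>x \<in> lspan L {lbr L a b | a b. a \<in> S \<and> b \<in> S}. ad_nilpotent L x)"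

definition generated_subalgebra :: "('f, 'a, 'b) liealg_scheme \<Rightarrow> 'a set \<Rightarrow> 'a set" where
  "generated_subalgebra L X = \<Inter>{T. subalgebra L T \<and> X \<subseteq> T}"

definition two_generated :: "('f, 'a, 'b) liealg_scheme \<Rightarrow> 'a set \<Rightarrow> bool" where
  "two_generated L S \<longleftrightarrow>
     (\<exists>a\<in>lcarr L. \<exists>b\<in>lcarr L. S = generated_subalgebra L {a, b})"

end

theory Submission
  imports Defs "Jordan_Normal_Form.VS_Connect"
begin



definition VM :: "('f::field,'a) liealg \<Rightarrow> ('f,'a) module" where
  "VM L = \<lparr>carrier = lcarr L, mult = (\<lambda>x y. x), one = lzero L, zero = lzero L,
     add = ladd L, smult = lsmult L\<rparr>"

locale LA =
  fixes L :: "('f::field, 'a) liealg"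
  assumes la: "lie_algebra L"
begin

abbreviation "C \<equiv> lcarr L"
abbreviation "pl \<equiv> ladd L"
abbreviation "sm \<equiv> lsmult L"
abbreviation "br \<equiv> lbr L"
abbreviation "z0 \<equiv> lzero L"
abbreviation "ng x \<equiv> sm (-1) x"

lemma zero_C[simp]: "z0 \<in> C" using la unfolding lie_algebra_def by (elim conjE) simp
lemma pl_C[simp]: "x \<in> C \<Longrightarrow> y \<in> C \<Longrightarrow> pl x y \<in> C" using la unfolding lie_algebra_def by (elim conjE) simp
lemma sm_C[simp]: "x \<in> C \<Longrightarrow> sm c x \<in> C" using la unfolding lie_algebra_def by (elim conjE) simp
lemma br_C[simp]: "x \<in> C \<Longrightarrow> y \<in> C \<Longrightarrow> br x y \<in> C" using la unfolding lie_algebra_def by (elim conjE) simp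
lemma pl_assoc: "x \<in> C \<Longrightarrow> y \<in> C \<Longrightarrow> w \<in> C \<Longrightarrow> pl (pl x y) w = pl x (pl y w)"
  using la unfolding lie_algebra_def by (elim conjE) simp
lemma pl_comm: "x \<in> C \<Longrightarrow> y \<in> C \<Longrightarrow> pl x y = pl y x" using la unfolding lie_algebra_def by (elim conjE) simp
lemma pl_zero_l[simp]: "x \<in> C \<Longrightarrow> pl z0 x = x" using la unfolding lie_algebra_def by (elim conjE) simp
lemma pl_neg_r[simp]: "x \<in> C \<Longrightarrow> pl x (ng x) = z0" using la unfolding lie_algebra_def by (elim conjE) simp
lemma sm_one[simp]: "x \<in> C \<Longrightarrow> sm 1 x = x" using la unfolding lie_algebra_def by (elim conjE) simp
lemma sm_sm: "x \<in> C \<Longrightarrow> sm a (sm b x) = sm (a*b) x" using la unfolding lie_algebra_def by (elim conjE) simp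
lemma sm_distl: "x \<in> C \<Longrightarrow> sm (a+b) x = pl (sm a x) (sm b x)" using la unfolding lie_algebra_def by (elim conjE) simp
lemma sm_distr: "x \<in> C \<Longrightarrow> y \<in> C \<Longrightarrow> sm a (pl x y) = pl (sm a x) (sm a y)" using la unfolding lie_algebra_def by (elim conjE) simp
lemma br_pl_l: "x \<in> C \<Longrightarrow> y \<in> C \<Longrightarrow> w \<in> C \<Longrightarrow> br (pl x y) w = pl (br x w) (br y w)"
  using la unfolding lie_algebra_def by (elim conjE) simp
lemma br_pl_r: "x \<in> C \<Longrightarrow> y \<in> C \<Longrightarrow> w \<in> C \<Longrightarrow> br x (pl y w) = pl (br x y) (br x w)"
  using la unfolding lie_algebra_def by (elim conjE) simp
lemma br_sm_l: "x \<in> C \<Longrightarrow> y \<in> C \<Longrightarrow> br (sm a x) y = sm a (br x y)"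
  using la unfolding lie_algebra_def by (elim conjE) simp
lemma br_sm_r: "x \<in> C \<Longrightarrow> y \<in> C \<Longrightarrow> br x (sm a y) = sm a (br x y)"
  using la unfolding lie_algebra_def by (elim conjE) simp
lemma br_self[simp]: "x \<in> C \<Longrightarrow> br x x = z0" using la unfolding lie_algebra_def by (elim conjE) simp
lemma jacobi: "x \<in> C \<Longrightarrow> y \<in> C \<Longrightarrow> w \<in> C \<Longrightarrow>
   pl (br x (br y w)) (pl (br y (br w x)) (br w (br x y))) = z0"
  using la unfolding lie_algebra_def by (elim conjE) simp

lemma pl_zero_r[simp]: "x \<in> C \<Longrightarrow> pl x z0 = x" using pl_comm[of x z0] by simp
lemma pl_neg_l[simp]: "x \<in> C \<Longrightarrow> pl (ng x) x = z0" using pl_comm[of x "ng x"] by simp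

lemma cancel_l: assumes "w \<in> C" "x \<in> C" "y \<in> C" "pl w x = pl w y" shows "x = y"
proof -
  have "pl (ng w) (pl w x) = pl (ng w) (pl w y)" using assms by simp
  moreover have "pl (ng w) (pl w x) = x" using assms pl_assoc[of "ng w" w x] by simp
  moreover have "pl (ng w) (pl w y) = y" using assms pl_assoc[of "ng w" w y] by simp
  ultimately show ?thesis by simp
qed

lemma neg_unique: assumes "x \<in> C" "y \<in> C" "pl x y = z0" shows "y = ng x"
  using cancel_l[of x y "ng x"] assms by simp

lemma sm_zero[simp]: "x \<in> C \<Longrightarrow> sm 0 x = z0"
proof -
  assume x: "x \<in> C"
  have "pl (sm 0 x) (sm 0 x) = pl (sm 0 x) z0" using sm_distl[OF x, of 0 0] x by simp
  thus ?thesis using cancel_l x by (metis sm_C zero_C)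
qed

lemma sm_zero_v[simp]: "sm c z0 = z0"
proof -
  have "pl (sm c z0) (sm c z0) = pl (sm c z0) z0" using sm_distr[of z0 z0 c] by simp
  thus ?thesis using cancel_l by (metis sm_C zero_C)
qed

lemma br_zero_l[simp]: "x \<in> C \<Longrightarrow> br z0 x = z0"
  using sm_zero[of z0] br_sm_l[of z0 x 0] by simp
lemma br_zero_r[simp]: "x \<in> C \<Longrightarrow> br x z0 = z0"
  using sm_zero[of z0] br_sm_r[of x z0 0] by simp

lemma neg_C[simp]: "x \<in> C \<Longrightarrow> ng x \<in> C" by simp

lemma br_anti: assumes "x \<in> C" "y \<in> C" shows "br y x = ng (br x y)"
proof -
  have "z0 = br (pl x y) (pl x y)" using assms by simp
  also have "\<dots> = pl (pl (br x x) (br y x)) (pl (br x y) (br y y))"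
    using assms by (simp del: br_self add: br_pl_l br_pl_r)
  also have "\<dots> = pl (br y x) (br x y)"
    using assms by simp
  also have "\<dots> = pl (br x y) (br y x)" using assms pl_comm by simp
  finally show ?thesis using neg_unique assms by (metis br_C)
qed

lemma neg_pl: "x \<in> C \<Longrightarrow> y \<in> C \<Longrightarrow> ng (pl x y) = pl (ng x) (ng y)" by (simp add: sm_distr)
lemma neg_neg[simp]: "x \<in> C \<Longrightarrow> ng (ng x) = x" by (simp add: sm_sm)

lemma pl_left_comm: "x \<in> C \<Longrightarrow> y \<in> C \<Longrightarrow> w \<in> C \<Longrightarrow> pl x (pl y w) = pl y (pl x w)"
  by (metis pl_assoc pl_comm)

lemma jacobi2: assumes "x \<in> C" "y \<in> C" "w \<in> C"
  shows "br x (br y w) = pl (br (br x y) w) (br y (br x w))"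
proof -
  have a: "br y (br w x) = ng (br y (br x w))" using assms br_anti[of x w] br_sm_r by simp
  have b: "br w (br x y) = ng (br (br x y) w)" using assms br_anti[of "br x y" w] by simp
  have "pl (br x (br y w)) (ng (pl (br (br x y) w) (br y (br x w)))) = z0"
    using jacobi[OF assms] a b assms by (simp add: neg_pl pl_comm)
  hence "ng (pl (br (br x y) w) (br y (br x w))) = ng (br x (br y w))"
    using neg_unique assms by simp
  hence "ng (ng (pl (br (br x y) w) (br y (br x w)))) = ng (ng (br x (br y w)))" by simp
  thus ?thesis using assms by simp
qed


lemma VM_simps[simp]: "carrier (VM L) = C" "add (VM L) = pl" "zero (VM L) = z0" "smult (VM L) = sm"
  by (simp_all add: VM_def)

lemma cring_K: "cring (class_ring :: 'f ring)"
proof -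
  show ?thesis using class_field unfolding field_def domain_def by blast
qed

lemma VM_module: "module (class_ring :: 'f ring) (VM L)"
proof (rule moduleI)
  show "cring (class_ring :: 'f ring)" by (rule cring_K)
  show "abelian_group (VM L)"
  proof (rule abelian_groupI)
    fix x assume "x \<in> carrier (VM L)"
    thus "\<exists>y\<in>carrier (VM L). y \<oplus>\<^bsub>VM L\<^esub> x = \<zero>\<^bsub>VM L\<^esub>"
      by (intro bexI[of _ "ng x"]) auto
  next
    fix x y z assume "x \<in> carrier (VM L)" "y \<in> carrier (VM L)" "z \<in> carrier (VM L)"
    thus "x \<oplus>\<^bsub>VM L\<^esub> y \<oplus>\<^bsub>VM L\<^esub> z = x \<oplus>\<^bsub>VM L\<^esub> (y \<oplus>\<^bsub>VM L\<^esub> z)"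
      using pl_assoc by simp
  next
    fix x y assume "x \<in> carrier (VM L)" "y \<in> carrier (VM L)"
    thus "x \<oplus>\<^bsub>VM L\<^esub> y = y \<oplus>\<^bsub>VM L\<^esub> x" using pl_comm by simp
  qed auto
qed (auto simp: sm_distl sm_distr sm_sm)

lemma VM_vs: "vectorspace (class_ring :: 'f ring) (VM L)"
  using VM_module class_field by (simp add: vectorspace_def)

definition li :: "'a set \<Rightarrow> bool" where
  "li B \<longleftrightarrow> \<not> module.lin_dep (class_ring :: 'f ring) (VM L) B"

lemma sub_submodule: "lsubspace L U \<Longrightarrow> LinearCombinations.submodule (class_ring :: 'f ring) U (VM L)"
  unfolding LinearCombinations.submodule_def lsubspace_def using VM_module by auto

lemma li_empty: "li {}"
  unfolding li_def module.lin_dep_def[OF VM_module] by auto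

end

locale LAF = LA L for L :: "('f::field, 'a) liealg" +
  assumes fd: "finite_dim L"
begin

lemma VM_fin: "vectorspace.fin_dim (class_ring :: 'f ring) (VM L)"
proof -
  obtain B where B: "finite B" "B \<subseteq> C" "lspan L B = C" using fd unfolding finite_dim_def by blast
  let ?sp = "LinearCombinations.module.span (class_ring :: 'f ring) (VM L) B"
  have sub: "LinearCombinations.submodule (class_ring :: 'f ring) ?sp (VM L)"
    using module.span_is_submodule[OF VM_module] B by simp
  have own: "B \<subseteq> ?sp" using module.in_own_span[OF VM_module] B by simp
  have "\<And>xs. set (map snd xs) \<subseteq> B \<Longrightarrow> lincomb L xs \<in> ?sp"
  proof -
    fix xs :: "('f \<times> 'a) list"
    show "set (map snd xs) \<subseteq> B \<Longrightarrow> lincomb L xs \<in> ?sp"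
    proof (induction xs)
      case Nil then show ?case using sub unfolding LinearCombinations.submodule_def by simp
    next
      case (Cons p xs)
      obtain c v where p: "p = (c, v)" by (cases p)
      have v: "v \<in> ?sp" using Cons.prems own p by auto
      have r: "lincomb L xs \<in> ?sp" using Cons by auto
      have "sm c v \<in> ?sp" using sub v unfolding LinearCombinations.submodule_def by auto
      then show ?case using sub r p unfolding LinearCombinations.submodule_def by auto
    qed
  qed
  hence "lspan L B \<subseteq> ?sp" unfolding lspan_def by auto
  hence "C \<subseteq> ?sp" using B(3) by simp
  moreover have "?sp \<subseteq> C" using sub unfolding LinearCombinations.submodule_def by simp
  ultimately show ?thesis unfolding vectorspace.fin_dim_def[OF VM_vs] using B by auto
qed

abbreviation "dm \<equiv> vectorspace.dim (class_ring :: 'f ring) (VM L)"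

lemma li_bound: "B \<subseteq> C \<Longrightarrow> li B \<Longrightarrow> finite B \<and> card B \<le> dm"
  using vectorspace.li_le_dim[OF VM_vs VM_fin, of B] unfolding li_def by simp

definition rk :: "'a set \<Rightarrow> nat" where
  "rk U = (GREATEST n. \<exists>B. B \<subseteq> U \<and> finite B \<and> card B = n \<and> li B)"

lemma rk_bd: "\<And>y. \<exists>B. B \<subseteq> U \<and> finite B \<and> card B = y \<and> li B \<Longrightarrow> U \<subseteq> C \<Longrightarrow> y \<le> dm"
proof -
  fix y assume "\<exists>B. B \<subseteq> U \<and> finite B \<and> card B = y \<and> li B" "U \<subseteq> C"
  then obtain B where "B \<subseteq> U" "card B = y" "li B" by blast
  thus "y \<le> dm" using li_bound[of B] \<open>U \<subseteq> C\<close> by simp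
qed

lemma rk_ex: assumes "U \<subseteq> C" shows "\<exists>B. B \<subseteq> U \<and> finite B \<and> card B = rk U \<and> li B"
  unfolding rk_def
proof (rule GreatestI_nat[where k=0 and b=dm])
  show "\<exists>B. B \<subseteq> U \<and> finite B \<and> card B = 0 \<and> li B" using li_empty by (intro exI[of _ "{}"]) simp
  show "\<And>y. \<exists>B. B \<subseteq> U \<and> finite B \<and> card B = y \<and> li B \<Longrightarrow> y \<le> dm" using rk_bd assms by blast
qed

lemma rk_ge: assumes "U \<subseteq> C" "B \<subseteq> U" "finite B" "li B" shows "card B \<le> rk U"
  unfolding rk_def
proof (rule Greatest_le_nat[where b=dm])
  show "\<exists>B'. B' \<subseteq> U \<and> finite B' \<and> card B' = card B \<and> li B'" using assms by blast
  show "\<And>y. \<exists>B. B \<subseteq> U \<and> finite B \<and> card B = y \<and> li B \<Longrightarrow> y \<le> dm" using rk_bd assms by blast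
qed

lemma rk_le: assumes "U \<subseteq> C" shows "rk U \<le> dm"
proof -
  obtain B where "B \<subseteq> U" "card B = rk U" "li B" using rk_ex[OF assms] by blast
  thus ?thesis using li_bound[of B] assms by simp
qed

lemma rk_mono: assumes "U \<subseteq> W" "W \<subseteq> C" shows "rk U \<le> rk W"
proof -
  obtain B where "B \<subseteq> U" "finite B" "card B = rk U" "li B" using rk_ex[of U] assms by blast
  thus ?thesis using rk_ge[of W B] assms by simp
qed

lemma rk_strict: assumes U: "lsubspace L U" and W: "lsubspace L W" and "U \<subseteq> W" "U \<noteq> W"
  shows "rk U < rk W"
proof -
  have UC: "U \<subseteq> C" "W \<subseteq> C" using U W unfolding lsubspace_def by auto
  obtain B where B: "B \<subseteq> U" "finite B" "card B = rk U" "li B" using rk_ex[OF UC(1)] by blast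
  obtain w where w: "w \<in> W" "w \<notin> U" using assms by blast
  have "LinearCombinations.module.span (class_ring :: 'f ring) (VM L) B \<subseteq> U"
    using module.span_is_subset[OF VM_module B(1) sub_submodule[OF U]] .
  hence nsp: "w \<notin> LinearCombinations.module.span (class_ring :: 'f ring) (VM L) B" using w by auto
  have wC: "w \<in> C" using w UC by auto
  have BC: "B \<subseteq> carrier (VM L)" using B UC by auto
  have wB: "w \<notin> B" using B w by auto
  have "li (B \<union> {w})"
    using vectorspace.lin_dep_iff_in_span[OF VM_vs BC, of w] B wC wB nsp unfolding li_def by simp
  moreover have "B \<union> {w} \<subseteq> W" using B assms w by auto
  ultimately have "card (B \<union> {w}) \<le> rk W" using rk_ge[OF UC(2)] B by simp
  moreover have "card (B \<union> {w}) = rk U + 1" using B wB by simp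
  ultimately show ?thesis by simp
qed

lemma max_ex: assumes "P U0" "\<And>U. P U \<Longrightarrow> lsubspace L U"
  shows "\<exists>M. P M \<and> U0 \<subseteq> M \<and> (\<forall>N. P N \<and> M \<subseteq> N \<longrightarrow> N = M)"
proof -
  let ?Q = "\<lambda>r. \<exists>U. P U \<and> U0 \<subseteq> U \<and> rk U = r"
  have bd: "\<And>r. ?Q r \<Longrightarrow> r \<le> dm"
  proof -
    fix r assume "?Q r"
    then obtain U where "P U" "rk U = r" by blast
    thus "r \<le> dm" using rk_le[of U] assms(2)[of U] unfolding lsubspace_def by simp
  qed
  have q0: "?Q (rk U0)" using assms(1) by blast
  have "?Q (Greatest ?Q)" by (rule GreatestI_nat[where P="?Q", OF q0 bd])
  then obtain M where M: "P M" "U0 \<subseteq> M" "rk M = Greatest ?Q" by blast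
  have "\<forall>N. P N \<and> M \<subseteq> N \<longrightarrow> N = M"
  proof (intro allI impI)
    fix N assume N: "P N \<and> M \<subseteq> N"
    show "N = M"
    proof (rule ccontr)
      assume ne: "N \<noteq> M"
      have "rk M < rk N" using rk_strict[OF assms(2)[OF M(1)] assms(2)] N ne by simp
      moreover have qn: "?Q (rk N)" using N M by blast
      have "rk N \<le> Greatest ?Q" by (rule Greatest_le_nat[where P="?Q", OF qn bd])
      ultimately show False using M by simp
    qed
  qed
  thus ?thesis using M by blast
qed

lemma dec_stab: assumes "\<And>k. lsubspace L (f k)" "\<And>k. f (Suc k) \<subseteq> f k"
  shows "\<exists>k. f (Suc k) = f k"
proof (rule ccontr)
  assume "\<not> ?thesis"
  hence ne: "\<And>k. f (Suc k) \<noteq> f k" by blast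
  have "\<And>k. rk (f k) + k \<le> rk (f 0)"
  proof -
    fix k show "rk (f k) + k \<le> rk (f 0)"
    proof (induction k)
      case (Suc k)
      have "rk (f (Suc k)) < rk (f k)" using rk_strict[OF assms(1) assms(1) assms(2)] ne[of k] by blast
      then show ?case using Suc by simp
    qed simp
  qed
  from this[of "Suc (rk (f 0))"] show False by simp
qed

lemma inc_stab: assumes "\<And>k. lsubspace L (f k)" "\<And>k. f k \<subseteq> f (Suc k)"
  shows "\<exists>k. f (Suc k) = f k"
proof (rule ccontr)
  assume "\<not> ?thesis"
  hence ne: "\<And>k. f (Suc k) \<noteq> f k" by blast
  have kk: "\<And>k. k \<le> rk (f k)"
  proof -
    fix k show "k \<le> rk (f k)"
    proof (induction k)
      case (Suc k)
      have "rk (f k) < rk (f (Suc k))" using rk_strict[OF assms(1) assms(1) assms(2)] ne[of k] by auto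
      then show ?case using Suc by simp
    qed simp
  qed
  have "f (Suc dm) \<subseteq> C" using assms(1)[of "Suc dm"] unfolding lsubspace_def by simp
  hence "rk (f (Suc dm)) \<le> dm" by (rule rk_le)
  moreover have "Suc dm \<le> rk (f (Suc dm))" by (rule kk)
  ultimately show False by simp
qed

end



context LA begin

lemma sub_C: "lsubspace L U \<Longrightarrow> U \<subseteq> C" unfolding lsubspace_def by auto
lemma sub_zero: "lsubspace L U \<Longrightarrow> z0 \<in> U" unfolding lsubspace_def by auto
lemma sub_pl: "lsubspace L U \<Longrightarrow> x \<in> U \<Longrightarrow> y \<in> U \<Longrightarrow> pl x y \<in> U" unfolding lsubspace_def by auto
lemma sub_sm: "lsubspace L U \<Longrightarrow> x \<in> U \<Longrightarrow> sm c x \<in> U" unfolding lsubspace_def by auto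
lemma sub_CI: "lsubspace L U \<Longrightarrow> x \<in> U \<Longrightarrow> x \<in> C" unfolding lsubspace_def by auto

lemma pl_4: "a \<in> C \<Longrightarrow> b \<in> C \<Longrightarrow> c \<in> C \<Longrightarrow> d \<in> C \<Longrightarrow> pl (pl a b) (pl c d) = pl (pl a c) (pl b d)"
  by (simp add: pl_assoc pl_left_comm)

lemma subalg_sub: "subalgebra L S \<Longrightarrow> lsubspace L S" unfolding subalgebra_def by auto
lemma subalg_br: "subalgebra L S \<Longrightarrow> x \<in> S \<Longrightarrow> y \<in> S \<Longrightarrow> br x y \<in> S" unfolding subalgebra_def by auto

lemma sub_sum: assumes "lsubspace L U" "lsubspace L W"
  shows "lsubspace L {pl u w |u w. u \<in> U \<and> w \<in> W}"
proof -
  have C: "\<And>u. u \<in> U \<Longrightarrow> u \<in> C" "\<And>w. w \<in> W \<Longrightarrow> w \<in> C" using assms sub_CI by auto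
  show ?thesis unfolding lsubspace_def
  proof (intro conjI ballI allI)
    show "{pl u w |u w. u \<in> U \<and> w \<in> W} \<subseteq> C" using C by auto
    show "z0 \<in> {pl u w |u w. u \<in> U \<and> w \<in> W}" using assms sub_zero by (intro CollectI exI[of _ z0]) simp
  next
    fix x y assume "x \<in> {pl u w |u w. u \<in> U \<and> w \<in> W}" "y \<in> {pl u w |u w. u \<in> U \<and> w \<in> W}"
    then obtain u w u' w' where "x = pl u w" "y = pl u' w'" "u \<in> U" "w \<in> W" "u' \<in> U" "w' \<in> W" by blast
    thus "pl x y \<in> {pl u w |u w. u \<in> U \<and> w \<in> W}" using C assms sub_pl pl_4
      by (intro CollectI exI[of _ "pl u u'"] exI[of _ "pl w w'"]) auto
  next
    fix c x assume "x \<in> {pl u w |u w. u \<in> U \<and> w \<in> W}"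
    then obtain u w where "x = pl u w" "u \<in> U" "w \<in> W" by blast
    thus "sm c x \<in> {pl u w |u w. u \<in> U \<and> w \<in> W}" using C assms sub_sm sm_distr
      by (intro CollectI exI[of _ "sm c u"] exI[of _ "sm c w"]) auto
  qed
qed

lemma ideal_sum: assumes "ideal_in L S I" "ideal_in L S J" "subalgebra L S"
  shows "ideal_in L S {pl u w |u w. u \<in> I \<and> w \<in> J}"
proof -
  have s: "lsubspace L I" "lsubspace L J" using assms unfolding ideal_in_def by auto
  have C: "\<And>u. u \<in> I \<Longrightarrow> u \<in> C" "\<And>w. w \<in> J \<Longrightarrow> w \<in> C" using s sub_CI by auto
  have SC: "\<And>s. s \<in> S \<Longrightarrow> s \<in> C" using assms(3) subalg_sub sub_CI by blast
  show ?thesis unfolding ideal_in_def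
  proof (intro conjI ballI)
    show "lsubspace L {pl u w |u w. u \<in> I \<and> w \<in> J}" using sub_sum s .
    show "{pl u w |u w. u \<in> I \<and> w \<in> J} \<subseteq> S" using assms(1,2,3) subalg_sub sub_pl unfolding ideal_in_def by blast
  next
    fix s x assume "s \<in> S" "x \<in> {pl u w |u w. u \<in> I \<and> w \<in> J}"
    then obtain u w where "x = pl u w" "u \<in> I" "w \<in> J" by blast
    thus "br s x \<in> {pl u w |u w. u \<in> I \<and> w \<in> J}" using C SC \<open>s \<in> S\<close> assms(1,2) br_pl_r
      unfolding ideal_in_def by (intro CollectI exI[of _ "br s u"] exI[of _ "br s w"]) auto
  qed
qed

lemma dp_C: "x \<in> C \<Longrightarrow> y \<in> C \<Longrightarrow> (br x ^^ k) y \<in> C"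
  by (induction k) auto
lemma dp_pl: "x \<in> C \<Longrightarrow> a \<in> C \<Longrightarrow> b \<in> C \<Longrightarrow> (br x ^^ k) (pl a b) = pl ((br x ^^ k) a) ((br x ^^ k) b)"
  by (induction k) (auto simp: dp_C br_pl_r)
lemma dp_sm: "x \<in> C \<Longrightarrow> a \<in> C \<Longrightarrow> (br x ^^ k) (sm c a) = sm c ((br x ^^ k) a)"
  by (induction k) (auto simp: dp_C br_sm_r)
lemma dp_zero: "x \<in> C \<Longrightarrow> (br x ^^ k) z0 = z0"
  by (induction k) auto
lemma dp_inv: "x \<in> C \<Longrightarrow> lsubspace L U \<Longrightarrow> (\<forall>u\<in>U. br x u \<in> U) \<Longrightarrow> u \<in> U \<Longrightarrow> (br x ^^ k) u \<in> U"
  by (induction k) auto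
lemma dp_add: "(br x ^^ (k + j)) y = (br x ^^ k) ((br x ^^ j) y)"
  by (simp add: funpow_add)
lemma dp_Suc_r: "(br x ^^ Suc k) y = (br x ^^ k) (br x y)"
  by (simp add: funpow_Suc_right del: funpow.simps)
lemma dp_zero_mono: "x \<in> C \<Longrightarrow> (br x ^^ k) y = z0 \<Longrightarrow> k \<le> j \<Longrightarrow> (br x ^^ j) y = z0"
proof -
  assume a: "x \<in> C" "(br x ^^ k) y = z0" "k \<le> j"
  then obtain d where "j = d + k" by (metis add.commute le_add_diff_inverse)
  thus ?thesis using a dp_zero dp_add by metis
qed

end

context LAF begin

lemma subalg_C: "subalgebra L C" unfolding subalgebra_def lsubspace_def by simp

definition Wm :: "'a set" where "Wm = C \<inter> \<Inter>{M. maximal_subalgebra L M}"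

lemma maxsub_sub: "maximal_subalgebra L M \<Longrightarrow> lsubspace L M"
  unfolding maximal_subalgebra_def subalgebra_def by blast

lemma Wm_pl: assumes "x \<in> Wm" "y \<in> Wm" shows "pl x y \<in> Wm"
proof -
  have "x \<in> C" "y \<in> C" using assms unfolding Wm_def by auto
  moreover have "\<And>M. maximal_subalgebra L M \<Longrightarrow> pl x y \<in> M"
  proof -
    fix M assume "maximal_subalgebra L M"
    moreover have "x \<in> M" "y \<in> M" using assms calculation unfolding Wm_def by auto
    ultimately show "pl x y \<in> M" using maxsub_sub sub_pl by blast
  qed
  ultimately show ?thesis unfolding Wm_def by auto
qed

lemma Wm_zero: "z0 \<in> Wm"
  unfolding Wm_def using maxsub_sub sub_zero by auto

lemma frat_ex: "\<exists>F. lideal L F \<and> F \<subseteq> Wm \<and> (\<forall>J. lideal L J \<and> J \<subseteq> Wm \<longrightarrow> J \<subseteq> F)"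
proof -
  let ?P = "\<lambda>I. lideal L I \<and> I \<subseteq> Wm"
  have z: "?P {z0}"
  proof
    show "lideal L {z0}" unfolding lideal_def ideal_in_def lsubspace_def by auto
    show "{z0} \<subseteq> Wm" using Wm_zero by simp
  qed
  have sp: "\<And>U. ?P U \<Longrightarrow> lsubspace L U" unfolding lideal_def ideal_in_def by blast
  obtain F where F: "?P F" "\<forall>N. ?P N \<and> F \<subseteq> N \<longrightarrow> N = F"
    using max_ex[of ?P "{z0}", OF z sp] by blast
  have "\<forall>J. lideal L J \<and> J \<subseteq> Wm \<longrightarrow> J \<subseteq> F"
  proof (intro allI impI)
    fix J assume J: "lideal L J \<and> J \<subseteq> Wm"
    let ?S = "{pl u w |u w. u \<in> J \<and> w \<in> F}"
    have JC: "J \<subseteq> C" "F \<subseteq> C" using J F(1) unfolding lideal_def ideal_in_def lsubspace_def by auto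
    have "lideal L ?S" using ideal_sum[of C J F, OF _ _ subalg_C] J F(1) unfolding lideal_def
      by blast
    moreover have "?S \<subseteq> Wm" using J F(1) Wm_pl by blast
    moreover have "F \<subseteq> ?S"
    proof
      fix f assume "f \<in> F"
      hence "f = pl z0 f" "z0 \<in> J" using JC J unfolding lideal_def ideal_in_def lsubspace_def by auto
      thus "f \<in> ?S" using \<open>f \<in> F\<close> by blast
    qed
    ultimately have eq: "?S = F" using F by blast
    show "J \<subseteq> F"
    proof
      fix j assume "j \<in> J"
      hence "j = pl j z0" "z0 \<in> F" using JC F(1) unfolding lideal_def ideal_in_def lsubspace_def by auto
      thus "j \<in> F" using \<open>j \<in> J\<close> eq by blast
    qed
  qed
  thus ?thesis using F by blast
qed

lemma frat_props: "lideal L (frattini L)" "frattini L \<subseteq> Wm"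
  "\<And>J. lideal L J \<Longrightarrow> J \<subseteq> Wm \<Longrightarrow> J \<subseteq> frattini L"
proof -
  obtain F where F: "lideal L F" "F \<subseteq> Wm" "\<forall>J. lideal L J \<and> J \<subseteq> Wm \<longrightarrow> J \<subseteq> F" using frat_ex by blast
  have "frattini L = F" unfolding frattini_def Wm_def[symmetric]
  proof (rule the_equality)
    show "lideal L F \<and> F \<subseteq> Wm \<and> (\<forall>J. lideal L J \<and> J \<subseteq> Wm \<longrightarrow> J \<subseteq> F)" using F by blast
    fix I assume I: "lideal L I \<and> I \<subseteq> Wm \<and> (\<forall>J. lideal L J \<and> J \<subseteq> Wm \<longrightarrow> J \<subseteq> I)"
    have "I \<subseteq> F" using I F by blast
    moreover have "F \<subseteq> I" using I F by blast
    ultimately show "I = F" by blast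
  qed
  thus "lideal L (frattini L)" "frattini L \<subseteq> Wm" "\<And>J. lideal L J \<Longrightarrow> J \<subseteq> Wm \<Longrightarrow> J \<subseteq> frattini L"
    using F by auto
qed

abbreviation "phi \<equiv> frattini L"

lemma phi_sub: "lsubspace L phi" using frat_props(1) unfolding lideal_def ideal_in_def by auto
lemma phi_C: "x \<in> phi \<Longrightarrow> x \<in> C" using phi_sub sub_CI by blast
lemma phi_br: "y \<in> C \<Longrightarrow> x \<in> phi \<Longrightarrow> br y x \<in> phi" using frat_props(1) unfolding lideal_def ideal_in_def by auto

lemma FP: assumes K: "subalgebra L K" and gen: "\<forall>y\<in>C. \<exists>k\<in>K. \<exists>f\<in>phi. y = pl k f"
  shows "K = C"
proof (rule ccontr)
  assume ne: "K \<noteq> C"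
  let ?P = "\<lambda>N. subalgebra L N \<and> N \<noteq> C"
  have sp: "\<And>U. ?P U \<Longrightarrow> lsubspace L U" using subalg_sub by blast
  have pk: "?P K" using K ne by blast
  obtain M where M: "?P M" "K \<subseteq> M" "\<forall>N. ?P N \<and> M \<subseteq> N \<longrightarrow> N = M"
    using max_ex[of ?P K, OF pk sp] by blast
  have "maximal_subalgebra L M" unfolding maximal_subalgebra_def using M by blast
  hence "phi \<subseteq> M" using frat_props(2) unfolding Wm_def by blast
  have "C \<subseteq> M"
  proof
    fix y assume "y \<in> C"
    then obtain k f where "k \<in> K" "f \<in> phi" "y = pl k f" using gen by blast
    thus "y \<in> M" using M(1,2) \<open>phi \<subseteq> M\<close> subalg_sub sub_pl by blast
  qed
  moreover have "M \<subseteq> C" using M(1) subalg_sub sub_C by blast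
  ultimately show False using M(1) by blast
qed

end



context LA begin

lemma der: "x \<in> C \<Longrightarrow> a \<in> C \<Longrightarrow> b \<in> C \<Longrightarrow> br x (br a b) = pl (br (br x a) b) (br a (br x b))"
  by (rule jacobi2)

lemma brk: "x \<in> C \<Longrightarrow> \<forall>a b i j. a \<in> C \<and> b \<in> C \<and> i + j \<le> s \<and> (br x ^^ i) a = z0 \<and> (br x ^^ j) b = z0
   \<longrightarrow> (br x ^^ s) (br a b) = z0"
proof (induction s)
  case 0
  then show ?case by auto
next
  case (Suc s)
  show ?case
  proof (intro allI impI)
    fix a b i j assume h: "a \<in> C \<and> b \<in> C \<and> i + j \<le> Suc s \<and> (br x ^^ i) a = z0 \<and> (br x ^^ j) b = z0"
    show "(br x ^^ Suc s) (br a b) = z0"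
    proof (cases "i = 0 \<or> j = 0")
      case True
      hence "a = z0 \<or> b = z0" using h by auto
      thus ?thesis using h Suc.prems dp_zero by auto
    next
      case False
      then obtain i' j' where ij: "i = Suc i'" "j = Suc j'" by (metis not0_implies_Suc)
      have a1: "(br x ^^ i') (br x a) = z0" using h ij dp_Suc_r by metis
      have b1: "(br x ^^ j') (br x b) = z0" using h ij dp_Suc_r by metis
      have C: "x \<in> C" "a \<in> C" "b \<in> C" using h Suc.prems by auto
      have "(br x ^^ Suc s) (br a b) = (br x ^^ s) (pl (br (br x a) b) (br a (br x b)))"
        using dp_Suc_r der C by metis
      also have "\<dots> = pl ((br x ^^ s) (br (br x a) b)) ((br x ^^ s) (br a (br x b)))"
        using dp_pl C by simp
      also have "(br x ^^ s) (br (br x a) b) = z0"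
        by (rule Suc.IH[OF C(1), rule_format, of "br x a" b i' j]) (use a1 h ij C in simp)
      also have "(br x ^^ s) (br a (br x b)) = z0"
        by (rule Suc.IH[OF C(1), rule_format, of a "br x b" i j']) (use b1 h ij C in simp)
      finally show ?thesis by simp
    qed
  qed
qed

end

context LAF begin

lemma EL: assumes x: "x \<in> C" and n: "\<forall>y\<in>C. (br x ^^ n) y \<in> phi"
  shows "ad_nilpotent L x"
proof -
  let ?D = "br x"
  define Im where "Im k = (?D ^^ k) ` C" for k
  have Im_sub: "lsubspace L (Im k)" for k
    unfolding lsubspace_def Im_def
  proof (intro conjI ballI allI)
    show "(?D ^^ k) ` C \<subseteq> C" using dp_C x by auto
    show "z0 \<in> (?D ^^ k) ` C" using dp_zero x by (metis image_eqI zero_C)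
  next
    fix a b assume "a \<in> (?D ^^ k) ` C" "b \<in> (?D ^^ k) ` C"
    then obtain a' b' where "a' \<in> C" "b' \<in> C" "a = (?D ^^ k) a'" "b = (?D ^^ k) b'" by blast
    thus "pl a b \<in> (?D ^^ k) ` C" using dp_pl x by (metis image_eqI pl_C)
  next
    fix c a assume "a \<in> (?D ^^ k) ` C"
    then obtain a' where "a' \<in> C" "a = (?D ^^ k) a'" by blast
    thus "sm c a \<in> (?D ^^ k) ` C" using dp_sm x by (metis image_eqI sm_C)
  qed
  have Im_Suc: "Im (Suc k) = ?D ` Im k" for k
    unfolding Im_def by (simp add: image_image)
  have Im_dec: "Im (Suc k) \<subseteq> Im k" for k
  proof
    fix y assume "y \<in> Im (Suc k)"
    then obtain z where "z \<in> C" "y = (?D ^^ Suc k) z" unfolding Im_def by blast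
    hence "y = (?D ^^ k) (?D z)" using dp_Suc_r by metis
    thus "y \<in> Im k" unfolding Im_def using \<open>z \<in> C\<close> x by simp
  qed
  obtain k0 where k0: "Im (Suc k0) = Im k0" using dec_stab[of Im, OF Im_sub Im_dec] by blast
  have stab: "Im (k0 + j) = Im k0" for j
  proof (induction j)
    case (Suc j)
    have "Im (k0 + Suc j) = ?D ` Im (k0 + j)" using Im_Suc by simp
    also have "\<dots> = ?D ` Im k0" using Suc by simp
    also have "\<dots> = Im k0" using Im_Suc k0 by simp
    finally show ?case .
  qed simp
  define m where "m = k0 + n"
  have Im_eq: "Im (m + m) = Im m" using stab[of "n + m"] stab[of n] unfolding m_def by (simp add: add.assoc)
  define L0 where "L0 = {y\<in>C. \<exists>k. (?D ^^ k) y = z0}"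
  have L0_sub: "subalgebra L L0"
    unfolding subalgebra_def lsubspace_def
  proof (intro conjI ballI allI)
    show "L0 \<subseteq> C" unfolding L0_def by auto
    show "z0 \<in> L0" unfolding L0_def using dp_zero x by auto
  next
    fix a b assume "a \<in> L0" "b \<in> L0"
    then obtain i j where ij: "a \<in> C" "b \<in> C" "(?D ^^ i) a = z0" "(?D ^^ j) b = z0" unfolding L0_def by blast
    have ai: "(?D ^^ (i + j)) a = z0" using dp_zero_mono[OF x ij(3)] by simp
    have bj: "(?D ^^ (i + j)) b = z0" using dp_zero_mono[OF x ij(4)] by simp
    have "(?D ^^ (i + j)) (pl a b) = z0" using dp_pl[OF x ij(1,2)] ai bj by simp
    thus "pl a b \<in> L0" unfolding L0_def using ij by auto
    have "(?D ^^ (i + j)) (br a b) = z0" using brk[OF x, of "i + j"] ij by blast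
    thus "br a b \<in> L0" unfolding L0_def using ij by auto
  next
    fix c a assume "a \<in> L0"
    then obtain i where "a \<in> C" "(?D ^^ i) a = z0" unfolding L0_def by blast
    thus "sm c a \<in> L0" unfolding L0_def using dp_sm x by (metis (mono_tags, lifting) mem_Collect_eq sm_C sm_zero_v)
  qed
  have "\<forall>y\<in>C. \<exists>k\<in>L0. \<exists>f\<in>phi. y = pl k f"
  proof
    fix y assume y: "y \<in> C"
    have "(?D ^^ m) y \<in> Im m" unfolding Im_def using y by simp
    hence "(?D ^^ m) y \<in> Im (m + m)" using Im_eq by simp
    then obtain z where z: "z \<in> C" "(?D ^^ m) y = (?D ^^ (m + m)) z" unfolding Im_def by blast
    define w where "w = (?D ^^ m) z"
    have wC: "w \<in> C" unfolding w_def using dp_C x z by simp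
    have wphi: "w \<in> phi"
    proof -
      have "w = (?D ^^ n) ((?D ^^ k0) z)" unfolding w_def m_def using dp_add by (metis add.commute)
      thus ?thesis using n dp_C x z by simp
    qed
    have "(?D ^^ m) (pl y (ng w)) = pl ((?D ^^ m) y) (ng ((?D ^^ m) w))"
      using dp_pl dp_sm x y wC by simp
    also have "(?D ^^ m) w = (?D ^^ m) y" using z unfolding w_def by (simp add: dp_add)
    finally have "(?D ^^ m) (pl y (ng w)) = z0" using dp_C x y by simp
    hence "pl y (ng w) \<in> L0" unfolding L0_def using y wC by auto
    moreover have "y = pl (pl y (ng w)) w" using y wC pl_assoc[of y "ng w" w] by simp
    ultimately show "\<exists>k\<in>L0. \<exists>f\<in>phi. y = pl k f" using wphi by blast
  qed
  hence L0C: "L0 = C" using FP L0_sub by blast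
  define Ke where "Ke k = {y\<in>C. (?D ^^ k) y = z0}" for k
  have Ke_sub: "lsubspace L (Ke k)" for k
    unfolding lsubspace_def Ke_def using dp_zero dp_pl dp_sm x by auto
  have Ke_inc: "Ke k \<subseteq> Ke (Suc k)" for k
    unfolding Ke_def using dp_zero_mono[OF x] x by auto
  obtain k1 where k1: "Ke (Suc k1) = Ke k1" using inc_stab[of Ke, OF Ke_sub Ke_inc] by blast
  have Kstab: "Ke (k1 + j) = Ke k1" for j
  proof (induction j)
    case (Suc j)
    have "Ke (k1 + Suc j) \<subseteq> Ke (k1 + j)"
    proof
      fix y assume "y \<in> Ke (k1 + Suc j)"
      hence y: "y \<in> C" "(?D ^^ Suc (k1 + j)) y = z0" unfolding Ke_def by auto
      hence "?D y \<in> Ke (k1 + j)" unfolding Ke_def using x dp_Suc_r by (metis (mono_tags, lifting) br_C mem_Collect_eq)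
      hence "?D y \<in> Ke (Suc k1)" using Suc k1 by simp
      hence "(?D ^^ Suc k1) (?D y) = z0" unfolding Ke_def by simp
      hence "(?D ^^ k1) (?D y) = z0"
        using k1 unfolding Ke_def using x y by (metis (mono_tags, lifting) br_C dp_Suc_r mem_Collect_eq)
      hence "(?D ^^ Suc k1) y = z0" using dp_Suc_r by metis
      thus "y \<in> Ke (k1 + j)" using Suc k1 y unfolding Ke_def by auto
    qed
    moreover have "Ke (k1 + j) \<subseteq> Ke (k1 + Suc j)" using Ke_inc by simp
    ultimately show ?case using Suc by blast
  qed simp
  have "\<forall>y\<in>C. (?D ^^ k1) y = z0"
  proof
    fix y assume "y \<in> C"
    then obtain k where "(?D ^^ k) y = z0" using L0C unfolding L0_def by blast
    hence "y \<in> Ke (k1 + k)" unfolding Ke_def using dp_zero_mono[OF x] \<open>y \<in> C\<close> by auto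
    thus "(?D ^^ k1) y = z0" using Kstab unfolding Ke_def by auto
  qed
  thus ?thesis unfolding ad_nilpotent_def by blast
qed

end



context LAF begin

lemma subalg_CI: "subalgebra L S \<Longrightarrow> x \<in> S \<Longrightarrow> x \<in> C" using subalg_sub sub_CI by blast

lemma engel:
  assumes "subalgebra L J" "\<forall>x\<in>J. \<exists>n. \<forall>y\<in>J. (br x ^^ n) y = z0"
    "lsubspace L U" "lsubspace L W" "W \<subseteq> U" "W \<noteq> U"
    "\<forall>x\<in>J. \<forall>u\<in>U. br x u \<in> U" "\<forall>x\<in>J. \<forall>w\<in>W. br x w \<in> W"
    "\<forall>x\<in>J. \<exists>n. \<forall>u\<in>U. (br x ^^ n) u \<in> W"
  shows "\<exists>u\<in>U. u \<notin> W \<and> (\<forall>x\<in>J. br x u \<in> W)"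
  using assms
proof (induction "rk J" arbitrary: J U W rule: less_induct)
  case less
  have JC: "\<And>x. x \<in> J \<Longrightarrow> x \<in> C" using less.prems(1) subalg_CI by blast
  have UC: "\<And>x. x \<in> U \<Longrightarrow> x \<in> C" using less.prems(3) sub_CI by blast
  show ?case
  proof (cases "J \<subseteq> {z0}")
    case True
    obtain u where u: "u \<in> U" "u \<notin> W" using less.prems(5,6) by blast
    have "\<forall>x\<in>J. br x u \<in> W" using True u UC less.prems(4) sub_zero by auto
    thus ?thesis using u by blast
  next
    case False
    let ?P = "\<lambda>H. subalgebra L H \<and> H \<subseteq> J \<and> H \<noteq> J"
    have z0J: "z0 \<in> J" using less.prems(1) subalg_sub sub_zero by blast
    have p0: "?P {z0}" using False z0J unfolding subalgebra_def lsubspace_def by auto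
    have sp: "\<And>H. ?P H \<Longrightarrow> lsubspace L H" using subalg_sub by blast
    obtain H where H: "?P H" "{z0} \<subseteq> H" and Hmax: "\<forall>N. ?P N \<and> H \<subseteq> N \<longrightarrow> N = H"
      using max_ex[of ?P "{z0}", OF p0 sp] by blast
    have HJ: "H \<subseteq> J" "H \<noteq> J" "subalgebra L H" using H by auto
    have HC: "\<And>x. x \<in> H \<Longrightarrow> x \<in> C" using HJ JC by blast
    have rkH: "rk H < rk J" using rk_strict[OF subalg_sub[OF HJ(3)] subalg_sub[OF less.prems(1)] HJ(1,2)] .
    have nilH: "\<forall>x\<in>H. \<exists>n. \<forall>y\<in>H. (br x ^^ n) y = z0" using less.prems(2) HJ by blast
    have "\<exists>u\<in>J. u \<notin> H \<and> (\<forall>x\<in>H. br x u \<in> H)"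
    proof (rule less.hyps[OF rkH HJ(3) nilH subalg_sub[OF less.prems(1)] subalg_sub[OF HJ(3)] HJ(1,2)])
      show "\<forall>x\<in>H. \<forall>u\<in>J. br x u \<in> J" using HJ less.prems(1) subalg_br by blast
      show "\<forall>x\<in>H. \<forall>w\<in>H. br x w \<in> H" using HJ(3) subalg_br by blast
      show "\<forall>x\<in>H. \<exists>n. \<forall>u\<in>J. (br x ^^ n) u \<in> H"
        using less.prems(2) HJ(1) H(2) by fastforce
    qed
    then obtain y where y: "y \<in> J" "y \<notin> H" "\<forall>h\<in>H. br h y \<in> H" by blast
    have yC: "y \<in> C" using y JC by blast
    let ?H' = "{pl h (sm c y) |h c. h \<in> H}"
    have inH': "\<And>h. h \<in> H \<Longrightarrow> h \<in> ?H'"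
    proof -
      fix h assume "h \<in> H"
      hence "h = pl h (sm 0 y)" using HC yC by simp
      thus "h \<in> ?H'" using \<open>h \<in> H\<close> by blast
    qed
    have Hs: "lsubspace L H" using subalg_sub[OF HJ(3)] .
    have H'sub: "subalgebra L ?H'"
      unfolding subalgebra_def lsubspace_def
    proof (intro conjI ballI allI)
      show "?H' \<subseteq> C" using HC yC by auto
      show "z0 \<in> ?H'" using inH' sub_zero[OF Hs] by blast
    next
      fix a b assume "a \<in> ?H'" "b \<in> ?H'"
      then obtain h c h' c' where ab: "a = pl h (sm c y)" "b = pl h' (sm c' y)" "h \<in> H" "h' \<in> H" by blast
      have "pl a b = pl (pl h h') (sm (c + c') y)" using ab HC yC pl_4 sm_distl by simp
      moreover have "pl h h' \<in> H" using ab sub_pl[OF Hs] by blast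
      ultimately show "pl a b \<in> ?H'" by blast
      have hC: "h \<in> C" "h' \<in> C" using ab HC by auto
      have "br a b = pl (pl (br h h') (br (sm c y) h')) (pl (br h (sm c' y)) (br (sm c y) (sm c' y)))"
        using ab hC yC by (simp del: br_self add: br_pl_l br_pl_r)
      also have "\<dots> = pl (pl (br h h') (sm c (ng (br h' y)))) (pl (sm c' (br h y)) (sm c' (sm c (br y y))))"
        using hC yC by (simp del: br_self add: br_sm_l br_sm_r br_anti[of h' y])
      finally have eq: "br a b = pl (pl (br h h') (sm c (ng (br h' y)))) (pl (sm c' (br h y)) (sm c' (sm c (br y y))))" .
      have "pl (pl (br h h') (sm c (ng (br h' y)))) (pl (sm c' (br h y)) (sm c' (sm c (br y y)))) \<in> H"
      proof -
        have e1: "br h h' \<in> H" using ab subalg_br[OF HJ(3)] by blast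
        have e2: "sm c (ng (br h' y)) \<in> H" using ab y sub_sm[OF Hs] by blast
        have e3: "sm c' (br h y) \<in> H" using ab y sub_sm[OF Hs] by blast
        have e4: "sm c' (sm c (br y y)) \<in> H" using yC sub_zero[OF Hs] by simp
        show ?thesis using e1 e2 e3 e4 sub_pl[OF Hs] by blast
      qed
      thus "br a b \<in> ?H'" using eq inH' by simp
    next
      fix d a assume "a \<in> ?H'"
      then obtain h c where ab: "a = pl h (sm c y)" "h \<in> H" by blast
      have "sm d a = pl (sm d h) (sm (d * c) y)" using ab HC yC sm_distr sm_sm by simp
      moreover have "sm d h \<in> H" using ab sub_sm[OF Hs] by blast
      ultimately show "sm d a \<in> ?H'" by blast
    qed
    have H'J: "?H' \<subseteq> J"
    proof
      fix a assume "a \<in> ?H'"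
      then obtain h c where "a = pl h (sm c y)" "h \<in> H" by blast
      thus "a \<in> J" using HJ y less.prems(1) subalg_sub sub_pl sub_sm by blast
    qed
    have "y \<in> ?H'"
    proof -
      have "y = pl z0 (sm 1 y)" using yC by simp
      thus ?thesis using sub_zero[OF Hs] by blast
    qed
    hence "?H' \<noteq> H" using y by blast
    moreover have "H \<subseteq> ?H'" using inH' by blast
    ultimately have "\<not> ?P ?H'" using Hmax by blast
    hence H'eq: "?H' = J" using H'sub H'J by blast
    have decomp: "\<And>x. x \<in> J \<Longrightarrow> \<exists>h c. h \<in> H \<and> x = pl h (sm c y)" using H'eq by blast
    define W0 where "W0 = {u\<in>U. \<forall>h\<in>H. br h u \<in> W}"
    have Ws: "lsubspace L W" using less.prems(4) .
    have WC: "\<And>w. w \<in> W \<Longrightarrow> w \<in> C" using Ws sub_CI by blast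
    have W0s: "lsubspace L W0"
      unfolding W0_def lsubspace_def
    proof (intro conjI ballI allI)
      show "{u \<in> U. \<forall>h\<in>H. br h u \<in> W} \<subseteq> C" using UC by auto
      show "z0 \<in> {u \<in> U. \<forall>h\<in>H. br h u \<in> W}" using HC sub_zero[OF Ws] sub_zero[OF less.prems(3)] by auto
    next
      fix a b assume "a \<in> {u \<in> U. \<forall>h\<in>H. br h u \<in> W}" "b \<in> {u \<in> U. \<forall>h\<in>H. br h u \<in> W}"
      thus "pl a b \<in> {u \<in> U. \<forall>h\<in>H. br h u \<in> W}"
        using HC UC br_pl_r sub_pl[OF Ws] sub_pl[OF less.prems(3)] by auto
    next
      fix c a assume "a \<in> {u \<in> U. \<forall>h\<in>H. br h u \<in> W}"
      thus "sm c a \<in> {u \<in> U. \<forall>h\<in>H. br h u \<in> W}"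
        using HC UC br_sm_r sub_sm[OF Ws] sub_sm[OF less.prems(3)] by auto
    qed
    have W0inv: "\<forall>u\<in>W0. br y u \<in> W0"
    proof
      fix u assume u: "u \<in> W0"
      hence uU: "u \<in> U" "\<forall>h\<in>H. br h u \<in> W" unfolding W0_def by auto
      have "br y u \<in> U" using less.prems(7) y uU by blast
      moreover have "\<forall>h\<in>H. br h (br y u) \<in> W"
      proof
        fix h assume h: "h \<in> H"
        have "br h (br y u) = pl (br (br h y) u) (br y (br h u))" by (rule der) (use HC h yC UC uU in auto)
        moreover have "br (br h y) u \<in> W" using y(3) h uU by blast
        moreover have "br y (br h u) \<in> W" using less.prems(8) y h uU by blast
        ultimately show "br h (br y u) \<in> W" using sub_pl[OF Ws] by simp
      qed
      ultimately show "br y u \<in> W0" unfolding W0_def by blast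
    qed
    have nilH2: "\<forall>x\<in>H. \<exists>n. \<forall>u\<in>U. (br x ^^ n) u \<in> W" using less.prems(9) HJ by blast
    have "\<exists>u\<in>U. u \<notin> W \<and> (\<forall>x\<in>H. br x u \<in> W)"
    proof (rule less.hyps[OF rkH HJ(3) nilH less.prems(3,4,5,6) _ _ nilH2])
      show "\<forall>x\<in>H. \<forall>u\<in>U. br x u \<in> U" using less.prems(7) HJ by blast
      show "\<forall>x\<in>H. \<forall>w\<in>W. br x w \<in> W" using less.prems(8) HJ by blast
    qed
    then obtain u1 where u1: "u1 \<in> U" "u1 \<notin> W" "\<forall>x\<in>H. br x u1 \<in> W" by blast
    have u1W0: "u1 \<in> W0" unfolding W0_def using u1 by blast
    obtain n where n: "\<forall>u\<in>U. (br y ^^ n) u \<in> W" using less.prems(9) y by blast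
    define k where "k = (LEAST k. (br y ^^ k) u1 \<in> W)"
    have kW: "(br y ^^ k) u1 \<in> W" unfolding k_def by (rule LeastI[of _ n]) (use n u1 in blast)
    have k0: "k \<noteq> 0" using kW u1 by (cases k) auto
    then obtain k' where k': "k = Suc k'" by (metis not0_implies_Suc)
    define u where "u = (br y ^^ k') u1"
    have uW0: "u \<in> W0" unfolding u_def using dp_inv[OF yC W0s W0inv u1W0] .
    have unW: "u \<notin> W" unfolding u_def using not_less_Least[of k' "\<lambda>k. (br y ^^ k) u1 \<in> W"] k' k_def by simp
    have yu: "br y u \<in> W" using kW k' unfolding u_def by simp
    have uU: "u \<in> U" "\<forall>h\<in>H. br h u \<in> W" using uW0 unfolding W0_def by auto
    have "\<forall>x\<in>J. br x u \<in> W"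
    proof
      fix x assume "x \<in> J"
      then obtain h c where hc: "h \<in> H" "x = pl h (sm c y)" using decomp by blast
      have "br x u = pl (br h u) (sm c (br y u))" using hc HC yC UC uU br_pl_l br_sm_l by simp
      thus "br x u \<in> W" using uU hc yu sub_pl[OF Ws] sub_sm[OF Ws] by simp
    qed
    thus ?thesis using uU unW by blast
  qed
qed

end



context LAF begin

primrec Zs :: "'a set \<Rightarrow> nat \<Rightarrow> 'a set" where
  "Zs I 0 = {z0}"
| "Zs I (Suc k) = {u\<in>C. \<forall>x\<in>I. br x u \<in> Zs I k}"

lemma ideal_subalg: "subalgebra L S \<Longrightarrow> ideal_in L S J \<Longrightarrow> subalgebra L J"
  unfolding ideal_in_def subalgebra_def by blast

lemma ideal_CI: "ideal_in L S J \<Longrightarrow> x \<in> J \<Longrightarrow> x \<in> C"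
  unfolding ideal_in_def using sub_CI by blast

lemma Zs_props:
  assumes S: "subalgebra L S" and I: "ideal_in L S I"
  shows "lsubspace L (Zs I k) \<and> (\<forall>s\<in>S. \<forall>u\<in>Zs I k. br s u \<in> Zs I k)"
proof (induction k)
  case 0
  have "lsubspace L {z0}" unfolding lsubspace_def by auto
  moreover have "\<forall>s\<in>S. \<forall>u\<in>{z0}. br s u \<in> {z0}" using S subalg_CI by auto
  ultimately show ?case by simp
next
  case (Suc k)
  have Zs: "lsubspace L (Zs I k)" and inv: "\<forall>s\<in>S. \<forall>u\<in>Zs I k. br s u \<in> Zs I k" using Suc by auto
  have IC: "\<And>x. x \<in> I \<Longrightarrow> x \<in> C" using I ideal_CI by blast
  have SC: "\<And>x. x \<in> S \<Longrightarrow> x \<in> C" using S subalg_CI by blast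
  have "lsubspace L (Zs I (Suc k))"
    unfolding lsubspace_def Zs.simps
  proof (intro conjI ballI allI)
    show "{u \<in> C. \<forall>x\<in>I. br x u \<in> Zs I k} \<subseteq> C" by auto
    show "z0 \<in> {u \<in> C. \<forall>x\<in>I. br x u \<in> Zs I k}" using IC sub_zero[OF Zs] by auto
  next
    fix a b assume a: "a \<in> {u \<in> C. \<forall>x\<in>I. br x u \<in> Zs I k}" and b: "b \<in> {u \<in> C. \<forall>x\<in>I. br x u \<in> Zs I k}"
    have "\<forall>x\<in>I. br x (pl a b) \<in> Zs I k"
    proof
      fix x assume x: "x \<in> I"
      have "br x (pl a b) = pl (br x a) (br x b)" using br_pl_r IC x a b by simp
      thus "br x (pl a b) \<in> Zs I k" using sub_pl[OF Zs] a b x by simp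
    qed
    thus "pl a b \<in> {u \<in> C. \<forall>x\<in>I. br x u \<in> Zs I k}" using a b by simp
  next
    fix c a assume a: "a \<in> {u \<in> C. \<forall>x\<in>I. br x u \<in> Zs I k}"
    have "\<forall>x\<in>I. br x (sm c a) \<in> Zs I k"
    proof
      fix x assume x: "x \<in> I"
      have "br x (sm c a) = sm c (br x a)" using br_sm_r IC x a by simp
      thus "br x (sm c a) \<in> Zs I k" using sub_sm[OF Zs] a x by simp
    qed
    thus "sm c a \<in> {u \<in> C. \<forall>x\<in>I. br x u \<in> Zs I k}" using a by simp
  qed
  moreover have "\<forall>s\<in>S. \<forall>u\<in>Zs I (Suc k). br s u \<in> Zs I (Suc k)"
  proof (intro ballI)
    fix s u assume s: "s \<in> S" and u: "u \<in> Zs I (Suc k)"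
    have uC: "u \<in> C" and uI: "\<forall>x\<in>I. br x u \<in> Zs I k" using u by auto
    have "\<forall>x\<in>I. br x (br s u) \<in> Zs I k"
    proof
      fix x assume x: "x \<in> I"
      have e: "br x (br s u) = pl (br (br x s) u) (br s (br x u))" by (rule der) (use IC x SC s uC in auto)
      have "br s x \<in> I" using I s x unfolding ideal_in_def by blast
      hence "ng (br s x) \<in> I" using I sub_sm unfolding ideal_in_def by blast
      hence "br x s \<in> I" using br_anti[of s x] IC x SC s by simp
      hence "br (br x s) u \<in> Zs I k" using uI by blast
      moreover have "br s (br x u) \<in> Zs I k" using inv s uI x by blast
      ultimately show "br x (br s u) \<in> Zs I k" using e sub_pl[OF Zs] by simp
    qed
    thus "br s u \<in> Zs I (Suc k)" using SC s uC by simp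
  qed
  ultimately show ?case by blast
qed

lemma Zs_mono:
  assumes S: "subalgebra L S" and I: "ideal_in L S I"
  shows "Zs I k \<subseteq> Zs I (Suc k)"
proof (induction k)
  case 0
  then show ?case using ideal_CI[OF I] by auto
next
  case (Suc k)
  then show ?case by auto
qed

lemma Zs_nil: assumes I: "ideal_in L S I" and x: "x \<in> I"
  shows "y \<in> Zs I k \<Longrightarrow> (br x ^^ k) y = z0"
proof (induction k arbitrary: y)
  case 0 then show ?case by simp
next
  case (Suc k)
  hence "br x y \<in> Zs I k" using x by auto
  hence "(br x ^^ k) (br x y) = z0" using Suc.IH by blast
  thus ?case using dp_Suc_r by metis
qed

lemma nil_sum:
  assumes S: "subalgebra L S" and J: "ideal_in L S J" and K: "ideal_in L S K"
    and nJ: "\<forall>x\<in>J. ad_nilpotent L x" and nK: "\<forall>x\<in>K. ad_nilpotent L x"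
  shows "\<forall>x\<in>{pl u w |u w. u \<in> J \<and> w \<in> K}. ad_nilpotent L x"
proof -
  let ?I = "{pl u w |u w. u \<in> J \<and> w \<in> K}"
  have I: "ideal_in L S ?I" using ideal_sum[OF J K S] .
  have JC: "\<And>x. x \<in> J \<Longrightarrow> x \<in> C" using J ideal_CI by blast
  have KC: "\<And>x. x \<in> K \<Longrightarrow> x \<in> C" using K ideal_CI by blast
  have SC: "\<And>x. x \<in> S \<Longrightarrow> x \<in> C" using S subalg_CI by blast
  have JS: "J \<subseteq> S" "K \<subseteq> S" using J K unfolding ideal_in_def by auto
  have strict: "Zs ?I k \<noteq> C \<Longrightarrow> Zs ?I k \<noteq> Zs ?I (Suc k)" for k
  proof -
    assume ne: "Zs ?I k \<noteq> C"
    let ?W = "Zs ?I k"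
    have Ws: "lsubspace L ?W" and Winv: "\<forall>s\<in>S. \<forall>u\<in>?W. br s u \<in> ?W" using Zs_props[OF S I] by auto
    have WC: "?W \<subseteq> C" using sub_C[OF Ws] .
    have Csub: "lsubspace L C" unfolding lsubspace_def by simp
    have "\<exists>u\<in>C. u \<notin> ?W \<and> (\<forall>x\<in>J. br x u \<in> ?W)"
    proof (rule engel[OF ideal_subalg[OF S J] _ Csub Ws WC ne])
      show "\<forall>x\<in>J. \<exists>n. \<forall>y\<in>J. (br x ^^ n) y = z0" using nJ JC unfolding ad_nilpotent_def by blast
      show "\<forall>x\<in>J. \<forall>u\<in>C. br x u \<in> C" using JC by simp
      show "\<forall>x\<in>J. \<forall>w\<in>?W. br x w \<in> ?W" using Winv JS by blast
      show "\<forall>x\<in>J. \<exists>n. \<forall>u\<in>C. (br x ^^ n) u \<in> ?W"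
      proof
        fix x assume "x \<in> J"
        then obtain n where "\<forall>y\<in>C. (br x ^^ n) y = z0" using nJ unfolding ad_nilpotent_def by blast
        hence "\<forall>u\<in>C. (br x ^^ n) u \<in> ?W" using sub_zero[OF Ws] by simp
        thus "\<exists>n. \<forall>u\<in>C. (br x ^^ n) u \<in> ?W" by blast
      qed
    qed
    then obtain u0 where u0: "u0 \<in> C" "u0 \<notin> ?W" "\<forall>x\<in>J. br x u0 \<in> ?W" by blast
    define U1 where "U1 = {u\<in>C. \<forall>j\<in>J. br j u \<in> ?W}"
    have U1s: "lsubspace L U1"
      unfolding lsubspace_def U1_def
    proof (intro conjI ballI allI)
      show "{u \<in> C. \<forall>j\<in>J. br j u \<in> ?W} \<subseteq> C" by auto
      show "z0 \<in> {u \<in> C. \<forall>j\<in>J. br j u \<in> ?W}" using JC sub_zero[OF Ws] by auto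
    next
      fix a b assume a: "a \<in> {u \<in> C. \<forall>j\<in>J. br j u \<in> ?W}" and b: "b \<in> {u \<in> C. \<forall>j\<in>J. br j u \<in> ?W}"
      have "\<forall>x\<in>J. br x (pl a b) \<in> ?W"
      proof
        fix x assume x: "x \<in> J"
        have "br x (pl a b) = pl (br x a) (br x b)" using br_pl_r JC x a b by simp
        thus "br x (pl a b) \<in> ?W" using sub_pl[OF Ws] a b x by simp
      qed
      thus "pl a b \<in> {u \<in> C. \<forall>j\<in>J. br j u \<in> ?W}" using a b by simp
    next
      fix c a assume a: "a \<in> {u \<in> C. \<forall>j\<in>J. br j u \<in> ?W}"
      have "\<forall>x\<in>J. br x (sm c a) \<in> ?W"
      proof
        fix x assume x: "x \<in> J"
        have "br x (sm c a) = sm c (br x a)" using br_sm_r JC x a by simp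
        thus "br x (sm c a) \<in> ?W" using sub_sm[OF Ws] a x by simp
      qed
      thus "sm c a \<in> {u \<in> C. \<forall>j\<in>J. br j u \<in> ?W}" using a by simp
    qed
    have WU1: "?W \<subseteq> U1" unfolding U1_def using WC Winv JS by blast
    have neU1: "?W \<noteq> U1" using u0 unfolding U1_def by blast
    have U1inv: "\<forall>x\<in>K. \<forall>u\<in>U1. br x u \<in> U1"
    proof (intro ballI)
      fix k u assume k: "k \<in> K" and u: "u \<in> U1"
      have uC: "u \<in> C" and uJ: "\<forall>j\<in>J. br j u \<in> ?W" using u unfolding U1_def by auto
      have "\<forall>j\<in>J. br j (br k u) \<in> ?W"
      proof
        fix j assume j: "j \<in> J"
        have e: "br j (br k u) = pl (br (br j k) u) (br k (br j u))" by (rule der) (use JC j KC k uC in auto)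
        have "br k j \<in> J" using J JS k j unfolding ideal_in_def by blast
        hence "ng (br k j) \<in> J" using J sub_sm unfolding ideal_in_def by blast
        hence "br j k \<in> J" using br_anti[of k j] JC j KC k by simp
        hence "br (br j k) u \<in> ?W" using uJ by blast
        moreover have "br k (br j u) \<in> ?W" using Winv JS k uJ j by blast
        ultimately show "br j (br k u) \<in> ?W" using e sub_pl[OF Ws] by simp
      qed
      thus "br k u \<in> U1" unfolding U1_def using KC k uC by simp
    qed
    have "\<exists>u\<in>U1. u \<notin> ?W \<and> (\<forall>x\<in>K. br x u \<in> ?W)"
    proof (rule engel[OF ideal_subalg[OF S K] _ U1s Ws WU1 neU1 U1inv])
      show "\<forall>x\<in>K. \<exists>n. \<forall>y\<in>K. (br x ^^ n) y = z0" using nK KC unfolding ad_nilpotent_def by blast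
      show "\<forall>x\<in>K. \<forall>w\<in>?W. br x w \<in> ?W" using Winv JS by blast
      show "\<forall>x\<in>K. \<exists>n. \<forall>u\<in>U1. (br x ^^ n) u \<in> ?W"
      proof
        fix x assume "x \<in> K"
        then obtain n where "\<forall>y\<in>C. (br x ^^ n) y = z0" using nK unfolding ad_nilpotent_def by blast
        hence "\<forall>u\<in>U1. (br x ^^ n) u \<in> ?W" using sub_zero[OF Ws] sub_C[OF U1s] by auto
        thus "\<exists>n. \<forall>u\<in>U1. (br x ^^ n) u \<in> ?W" by blast
      qed
    qed
    then obtain u where u: "u \<in> U1" "u \<notin> ?W" "\<forall>x\<in>K. br x u \<in> ?W" by blast
    have uC: "u \<in> C" and uJ: "\<forall>j\<in>J. br j u \<in> ?W" using u unfolding U1_def by auto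
    have "\<forall>x\<in>?I. br x u \<in> ?W"
    proof
      fix x assume "x \<in> ?I"
      then obtain j k where jk: "x = pl j k" "j \<in> J" "k \<in> K" by blast
      have "br x u = pl (br j u) (br k u)" using jk JC KC uC br_pl_l by simp
      thus "br x u \<in> ?W" using jk uJ u(3) sub_pl[OF Ws] by simp
    qed
    hence "u \<in> Zs ?I (Suc k)" using uC by simp
    thus ?thesis using u(2) by blast
  qed
  have "\<exists>m. Zs ?I m = C"
  proof (rule ccontr)
    assume "\<not> ?thesis"
    hence nC: "\<And>k. Zs ?I k \<noteq> C" by blast
    have "\<exists>k. Zs ?I (Suc k) = Zs ?I k"
      by (rule inc_stab) (use Zs_props[OF S I] Zs_mono[OF S I] in auto)
    then obtain k where "Zs ?I (Suc k) = Zs ?I k" by blast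
    thus False using strict[OF nC[of k]] by simp
  qed
  then obtain m where m: "Zs ?I m = C" by blast
  show ?thesis
  proof
    fix x assume "x \<in> ?I"
    hence "\<forall>y\<in>C. (br x ^^ m) y = z0" using Zs_nil[OF I] m by blast
    thus "ad_nilpotent L x" unfolding ad_nilpotent_def by blast
  qed
qed

lemma nil_ex: assumes S: "subalgebra L S"
  shows "\<exists>N. ideal_in L S N \<and> (\<forall>x\<in>N. ad_nilpotent L x) \<and>
    (\<forall>K. ideal_in L S K \<and> (\<forall>x\<in>K. ad_nilpotent L x) \<longrightarrow> K \<subseteq> N)"
proof -
  let ?P = "\<lambda>I. ideal_in L S I \<and> (\<forall>x\<in>I. ad_nilpotent L x)"
  have SC: "\<And>x. x \<in> S \<Longrightarrow> x \<in> C" using S subalg_CI by blast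
  have z: "?P {z0}"
  proof
    show "ideal_in L S {z0}" unfolding ideal_in_def lsubspace_def
      using S subalg_sub sub_zero SC by auto
    show "\<forall>x\<in>{z0}. ad_nilpotent L x" unfolding ad_nilpotent_def by (auto intro: exI[of _ 1])
  qed
  have sp: "\<And>U. ?P U \<Longrightarrow> lsubspace L U" unfolding ideal_in_def by blast
  obtain N where N: "?P N" and Nmax: "\<forall>M. ?P M \<and> N \<subseteq> M \<longrightarrow> M = N"
    using max_ex[of ?P "{z0}", OF z sp] by blast
  have "\<forall>K. ?P K \<longrightarrow> K \<subseteq> N"
  proof (intro allI impI)
    fix K assume K: "?P K"
    let ?S = "{pl u w |u w. u \<in> N \<and> w \<in> K}"
    have NC: "\<And>x. x \<in> N \<Longrightarrow> x \<in> C" "\<And>x. x \<in> K \<Longrightarrow> x \<in> C" using N K ideal_CI by blast+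
    have "?P ?S" using ideal_sum[of S N K] nil_sum[of S N K] N K S by blast
    moreover have "N \<subseteq> ?S"
    proof
      fix f assume "f \<in> N"
      hence "f = pl f z0" "z0 \<in> K" using NC K sp sub_zero by auto
      thus "f \<in> ?S" using \<open>f \<in> N\<close> by blast
    qed
    ultimately have eq: "?S = N" using Nmax by blast
    show "K \<subseteq> N"
    proof
      fix j assume "j \<in> K"
      hence "j = pl z0 j" "z0 \<in> N" using NC N sp sub_zero by auto
      thus "j \<in> N" using \<open>j \<in> K\<close> eq by blast
    qed
  qed
  thus ?thesis using N by blast
qed

lemma nil_props: assumes S: "subalgebra L S"
  shows "ideal_in L S (nil L S)" "\<forall>x\<in>nil L S. ad_nilpotent L x"
    "\<And>K. ideal_in L S K \<Longrightarrow> \<forall>x\<in>K. ad_nilpotent L x \<Longrightarrow> K \<subseteq> nil L S"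
proof -
  obtain N where N: "ideal_in L S N" "\<forall>x\<in>N. ad_nilpotent L x"
    "\<forall>K. ideal_in L S K \<and> (\<forall>x\<in>K. ad_nilpotent L x) \<longrightarrow> K \<subseteq> N" using nil_ex[OF S] by blast
  have "nil L S = N" unfolding nil_def
  proof (rule the_equality)
    show "ideal_in L S N \<and> (\<forall>x\<in>N. ad_nilpotent L x) \<and> (\<forall>K. ideal_in L S K \<and> (\<forall>x\<in>K. ad_nilpotent L x) \<longrightarrow> K \<subseteq> N)"
      using N by blast
    fix I assume I: "ideal_in L S I \<and> (\<forall>x\<in>I. ad_nilpotent L x) \<and> (\<forall>K. ideal_in L S K \<and> (\<forall>x\<in>K. ad_nilpotent L x) \<longrightarrow> K \<subseteq> I)"
    have "I \<subseteq> N" using I N(3) by blast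
    moreover have "N \<subseteq> I" using I N(1,2) by blast
    ultimately show "I = N" by blast
  qed
  thus "ideal_in L S (nil L S)" "\<forall>x\<in>nil L S. ad_nilpotent L x"
    "\<And>K. ideal_in L S K \<Longrightarrow> \<forall>x\<in>K. ad_nilpotent L x \<Longrightarrow> K \<subseteq> nil L S" using N by auto
qed

end



context LAF begin

abbreviation "Q \<equiv> quotient L phi"
abbreviation "cs \<equiv> coset L phi"

lemma Q_simps: "lcarr Q = cs ` C" "lzero Q = phi"
  "ladd Q = (\<lambda>P R. {pl p q | p q. p \<in> P \<and> q \<in> R})"
  "lsmult Q = (\<lambda>c P. {pl (sm c p) i | p i. p \<in> P \<and> i \<in> phi})"
  "lbr Q = (\<lambda>P R. {pl (br p q) i | p q i. p \<in> P \<and> q \<in> R \<and> i \<in> phi})"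
  by (simp_all add: quotient_def)

lemma phi_pl: "x \<in> phi \<Longrightarrow> y \<in> phi \<Longrightarrow> pl x y \<in> phi" using phi_sub sub_pl by blast
lemma phi_sm: "x \<in> phi \<Longrightarrow> sm c x \<in> phi" using phi_sub sub_sm by blast
lemma phi_z: "z0 \<in> phi" using phi_sub sub_zero by blast
lemma phi_br2: "x \<in> phi \<Longrightarrow> y \<in> C \<Longrightarrow> br x y \<in> phi"
proof -
  assume a: "x \<in> phi" "y \<in> C"
  have "br x y = ng (br y x)" using br_anti[of y x] a phi_C by simp
  thus ?thesis using phi_br[OF a(2) a(1)] phi_sm by simp
qed

lemma cs_mem: "x \<in> C \<Longrightarrow> x \<in> cs x"
  unfolding coset_def using phi_z by (intro CollectI exI[of _ z0]) simp

lemma cs_C: "x \<in> C \<Longrightarrow> y \<in> cs x \<Longrightarrow> y \<in> C"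
  unfolding coset_def using phi_C by auto

lemma cs_eq: assumes x: "x \<in> C" and y: "y \<in> cs x" shows "cs y = cs x"
proof -
  obtain i where i: "i \<in> phi" "y = pl x i" using y unfolding coset_def by blast
  have iC: "i \<in> C" using i phi_C by blast
  show ?thesis
  proof
    show "cs y \<subseteq> cs x"
    proof
      fix z assume "z \<in> cs y"
      then obtain j where j: "j \<in> phi" "z = pl y j" unfolding coset_def by blast
      have "z = pl x (pl i j)" using i j x iC phi_C pl_assoc by simp
      thus "z \<in> cs x" unfolding coset_def using phi_pl i j by blast
    qed
    show "cs x \<subseteq> cs y"
    proof
      fix z assume "z \<in> cs x"
      then obtain k where k: "k \<in> phi" "z = pl x k" unfolding coset_def by blast
      have kC: "k \<in> C" using k phi_C by blast
      have e: "pl i (pl (ng i) k) = k" using pl_assoc[of i "ng i" k] iC kC by simp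
      have "pl y (pl (ng i) k) = pl x (pl i (pl (ng i) k))"
        using i x iC kC pl_assoc[of x i "pl (ng i) k"] by simp
      also have "\<dots> = z" using k e by simp
      finally have "z = pl y (pl (ng i) k)" by simp
      moreover have "pl (ng i) k \<in> phi" using phi_pl phi_sm i k by blast
      ultimately show "z \<in> cs y" unfolding coset_def by blast
    qed
  qed
qed

lemma cs_z: "cs z0 = phi"
proof (intro equalityI subsetI)
  fix x assume "x \<in> cs z0"
  then obtain i where "i \<in> phi" "x = pl z0 i" unfolding coset_def by blast
  thus "x \<in> phi" using phi_C by simp
next
  fix x assume x: "x \<in> phi"
  hence "x = pl z0 x" using phi_C by simp
  thus "x \<in> cs z0" unfolding coset_def using x by blast
qed

lemma cs_phi_iff: "x \<in> C \<Longrightarrow> cs x = phi \<longleftrightarrow> x \<in> phi"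
proof
  assume "x \<in> C" "cs x = phi" thus "x \<in> phi" using cs_mem by blast
next
  assume x: "x \<in> C" "x \<in> phi"
  have "cs z0 = phi" by (rule cs_z)
  moreover have "cs x = cs z0" using cs_eq[of z0 x] x cs_z by simp
  ultimately show "cs x = phi" by simp
qed


lemma Q_add: assumes "x \<in> C" "y \<in> C" shows "ladd Q (cs x) (cs y) = cs (pl x y)"
proof -
  have xy: "x \<in> C" "y \<in> C" using assms .
  show ?thesis unfolding Q_simps
  proof
    show "{pl p q |p q. p \<in> cs x \<and> q \<in> cs y} \<subseteq> cs (pl x y)"
    proof
      fix z assume "z \<in> {pl p q |p q. p \<in> cs x \<and> q \<in> cs y}"
      then obtain i j where ij: "i \<in> phi" "j \<in> phi" "z = pl (pl x i) (pl y j)" unfolding coset_def by blast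
      hence "z = pl (pl x y) (pl i j)" using pl_4 xy phi_C by simp
      thus "z \<in> cs (pl x y)" unfolding coset_def using ij phi_pl by blast
    qed
    show "cs (pl x y) \<subseteq> {pl p q |p q. p \<in> cs x \<and> q \<in> cs y}"
    proof
      fix z assume "z \<in> cs (pl x y)"
      then obtain k where k: "k \<in> phi" "z = pl (pl x y) k" unfolding coset_def by blast
      hence "z = pl x (pl y k)" using pl_assoc xy phi_C by simp
      moreover have "pl y k \<in> cs y" unfolding coset_def using k by blast
      ultimately show "z \<in> {pl p q |p q. p \<in> cs x \<and> q \<in> cs y}" using cs_mem xy by blast
    qed
  qed
qed

lemma Q_sm: assumes x: "x \<in> C" shows "lsmult Q c (cs x) = cs (sm c x)"
  unfolding Q_simps
proof
  show "{pl (sm c p) i |p i. p \<in> cs x \<and> i \<in> phi} \<subseteq> cs (sm c x)"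
  proof
    fix z assume "z \<in> {pl (sm c p) i |p i. p \<in> cs x \<and> i \<in> phi}"
    then obtain i j where ij: "i \<in> phi" "j \<in> phi" "z = pl (sm c (pl x j)) i" unfolding coset_def by blast
    hence "z = pl (sm c x) (pl (sm c j) i)" using x phi_C sm_distr pl_assoc by simp
    thus "z \<in> cs (sm c x)" unfolding coset_def using ij phi_pl phi_sm by blast
  qed
  show "cs (sm c x) \<subseteq> {pl (sm c p) i |p i. p \<in> cs x \<and> i \<in> phi}"
  proof
    fix z assume "z \<in> cs (sm c x)"
    then obtain k where k: "k \<in> phi" "z = pl (sm c x) k" unfolding coset_def by blast
    thus "z \<in> {pl (sm c p) i |p i. p \<in> cs x \<and> i \<in> phi}" using cs_mem x by blast
  qed
qed

lemma Q_br: assumes x: "x \<in> C" and y: "y \<in> C" shows "lbr Q (cs x) (cs y) = cs (br x y)"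
  unfolding Q_simps
proof
  show "{pl (br p q) i |p q i. p \<in> cs x \<and> q \<in> cs y \<and> i \<in> phi} \<subseteq> cs (br x y)"
  proof
    fix z assume "z \<in> {pl (br p q) i |p q i. p \<in> cs x \<and> q \<in> cs y \<and> i \<in> phi}"
    then obtain i j k where ijk: "i \<in> phi" "j \<in> phi" "k \<in> phi" "z = pl (br (pl x i) (pl y j)) k"
      unfolding coset_def by blast
    have C: "i \<in> C" "j \<in> C" "k \<in> C" using ijk phi_C by auto
    have "br (pl x i) (pl y j) = pl (pl (br x y) (br i y)) (pl (br x j) (br i j))"
      using x y C by (simp add: br_pl_l br_pl_r)
    also have "\<dots> = pl (br x y) (pl (br i y) (pl (br x j) (br i j)))"
      using x y C pl_assoc by simp
    finally have "z = pl (br x y) (pl (pl (br i y) (pl (br x j) (br i j))) k)"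
      using ijk x y C pl_assoc by simp
    moreover have "pl (pl (br i y) (pl (br x j) (br i j))) k \<in> phi"
      using ijk C x y phi_pl phi_br phi_br2 by simp
    ultimately show "z \<in> cs (br x y)" unfolding coset_def by blast
  qed
  show "cs (br x y) \<subseteq> {pl (br p q) i |p q i. p \<in> cs x \<and> q \<in> cs y \<and> i \<in> phi}"
  proof
    fix z assume "z \<in> cs (br x y)"
    then obtain k where k: "k \<in> phi" "z = pl (br x y) k" unfolding coset_def by blast
    thus "z \<in> {pl (br p q) i |p q i. p \<in> cs x \<and> q \<in> cs y \<and> i \<in> phi}" using cs_mem x y by blast
  qed
qed

lemma Q_iter: "x \<in> C \<Longrightarrow> y \<in> C \<Longrightarrow> (lbr Q (cs x) ^^ n) (cs y) = cs ((br x ^^ n) y)"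
  by (induction n) (auto simp: Q_br dp_C)

lemma adnil_Q: assumes x: "x \<in> C" shows "ad_nilpotent Q (cs x) \<longleftrightarrow> ad_nilpotent L x"
proof
  assume "ad_nilpotent Q (cs x)"
  then obtain n where n: "\<forall>Y\<in>cs ` C. (lbr Q (cs x) ^^ n) Y = phi" unfolding ad_nilpotent_def Q_simps(1,2) by blast
  have "\<forall>y\<in>C. (br x ^^ n) y \<in> phi"
  proof
    fix y assume y: "y \<in> C"
    hence "cs ((br x ^^ n) y) = phi" using n Q_iter x by auto
    thus "(br x ^^ n) y \<in> phi" using cs_phi_iff dp_C x y by blast
  qed
  thus "ad_nilpotent L x" using EL x by blast
next
  assume "ad_nilpotent L x"
  then obtain n where n: "\<forall>y\<in>C. (br x ^^ n) y = z0" unfolding ad_nilpotent_def by blast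
  have "\<forall>Y\<in>lcarr Q. (lbr Q (cs x) ^^ n) Y = lzero Q"
    unfolding Q_simps(1,2) using n Q_iter x cs_z by auto
  thus "ad_nilpotent Q (cs x)" unfolding ad_nilpotent_def by blast
qed

lemma img_subspace: assumes "lsubspace L N" shows "lsubspace Q (cs ` N)"
proof -
  have NC: "\<And>x. x \<in> N \<Longrightarrow> x \<in> C" using assms sub_CI by blast
  show ?thesis unfolding lsubspace_def
  proof (intro conjI ballI allI)
    show "cs ` N \<subseteq> lcarr Q" unfolding Q_simps using NC by auto
    show "lzero Q \<in> cs ` N" unfolding Q_simps using cs_z sub_zero[OF assms] by (metis image_eqI)
  next
    fix X Y assume "X \<in> cs ` N" "Y \<in> cs ` N"
    then obtain x y where "x \<in> N" "y \<in> N" "X = cs x" "Y = cs y" by blast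
    thus "ladd Q X Y \<in> cs ` N" using Q_add NC sub_pl[OF assms] by (metis image_eqI)
  next
    fix c X assume "X \<in> cs ` N"
    then obtain x where "x \<in> N" "X = cs x" by blast
    thus "lsmult Q c X \<in> cs ` N" using Q_sm NC sub_sm[OF assms] by (metis image_eqI)
  qed
qed

lemma img_subalg: assumes "subalgebra L S" shows "subalgebra Q (cs ` S)"
proof -
  have SC: "\<And>x. x \<in> S \<Longrightarrow> x \<in> C" using assms subalg_CI by blast
  have "\<forall>X\<in>cs ` S. \<forall>Y\<in>cs ` S. lbr Q X Y \<in> cs ` S"
  proof (intro ballI)
    fix X Y assume "X \<in> cs ` S" "Y \<in> cs ` S"
    then obtain x y where "x \<in> S" "y \<in> S" "X = cs x" "Y = cs y" by blast
    thus "lbr Q X Y \<in> cs ` S" using Q_br SC subalg_br[OF assms] by (metis image_eqI)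
  qed
  thus ?thesis unfolding subalgebra_def using img_subspace subalg_sub[OF assms] by blast
qed

lemma pre_subspace: assumes "lsubspace Q T" shows "lsubspace L {x\<in>C. cs x \<in> T}"
  unfolding lsubspace_def
proof (intro conjI ballI allI)
  show "{x \<in> C. cs x \<in> T} \<subseteq> C" by auto
  show "z0 \<in> {x \<in> C. cs x \<in> T}" using assms cs_z unfolding lsubspace_def Q_simps by auto
next
  fix x y assume "x \<in> {x \<in> C. cs x \<in> T}" "y \<in> {x \<in> C. cs x \<in> T}"
  thus "pl x y \<in> {x \<in> C. cs x \<in> T}" using assms Q_add unfolding lsubspace_def by (metis (mono_tags, lifting) mem_Collect_eq pl_C)
next
  fix c x assume "x \<in> {x \<in> C. cs x \<in> T}"
  thus "sm c x \<in> {x \<in> C. cs x \<in> T}" using assms Q_sm unfolding lsubspace_def by (metis (mono_tags, lifting) mem_Collect_eq sm_C)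
qed

lemma pre_subalg: assumes "subalgebra Q T" shows "subalgebra L {x\<in>C. cs x \<in> T}"
proof -
  have "\<forall>x\<in>{x\<in>C. cs x \<in> T}. \<forall>y\<in>{x\<in>C. cs x \<in> T}. br x y \<in> {x\<in>C. cs x \<in> T}"
    using assms Q_br unfolding subalgebra_def by (metis (mono_tags, lifting) mem_Collect_eq br_C)
  thus ?thesis unfolding subalgebra_def using pre_subspace assms unfolding subalgebra_def by blast
qed

lemma QC_cs: "X \<in> lcarr Q \<Longrightarrow> \<exists>x\<in>C. X = cs x" unfolding Q_simps by blast

lemma part1: assumes S: "subalgebra L S" and pS: "phi \<subseteq> S"
  shows "nil Q (qimg L phi S) = qimg L phi (nil L S)"
proof -
  let ?N = "nil L S"
  let ?T = "cs ` ?N"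
  have SC: "\<And>x. x \<in> S \<Longrightarrow> x \<in> C" using S subalg_CI by blast
  have N: "ideal_in L S ?N" "\<forall>x\<in>?N. ad_nilpotent L x" using nil_props[OF S] by auto
  have NS: "?N \<subseteq> S" using N unfolding ideal_in_def by blast
  have NC: "\<And>x. x \<in> ?N \<Longrightarrow> x \<in> C" using NS SC by blast
  have Tid: "ideal_in Q (cs ` S) ?T"
    unfolding ideal_in_def
  proof (intro conjI ballI)
    show "lsubspace Q ?T" using img_subspace N(1) unfolding ideal_in_def by blast
    show "?T \<subseteq> cs ` S" using NS by blast
  next
    fix X Y assume "X \<in> cs ` S" "Y \<in> ?T"
    then obtain s n where "s \<in> S" "n \<in> ?N" "X = cs s" "Y = cs n" by blast
    moreover have "br s n \<in> ?N" using N(1) calculation unfolding ideal_in_def by blast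
    ultimately show "lbr Q X Y \<in> ?T" using Q_br SC NC by (metis image_eqI)
  qed
  have Tnil: "\<forall>X\<in>?T. ad_nilpotent Q X" using N(2) adnil_Q NC by blast
  have Tmax: "\<And>K'. ideal_in Q (cs ` S) K' \<Longrightarrow> \<forall>X\<in>K'. ad_nilpotent Q X \<Longrightarrow> K' \<subseteq> ?T"
  proof -
    fix K' assume K': "ideal_in Q (cs ` S) K'" "\<forall>X\<in>K'. ad_nilpotent Q X"
    let ?K = "{x\<in>C. cs x \<in> K'}"
    have K's: "lsubspace Q K'" using K' unfolding ideal_in_def by blast
    have Kid: "ideal_in L S ?K"
      unfolding ideal_in_def
    proof (intro conjI ballI)
      show "lsubspace L ?K" using pre_subspace K's .
      show "?K \<subseteq> S"
      proof
        fix x assume x: "x \<in> ?K"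
        hence "cs x \<in> cs ` S" using K' unfolding ideal_in_def by blast
        then obtain s where s: "s \<in> S" "cs x = cs s" by blast
        hence "x \<in> cs s" using cs_mem x by blast
        then obtain i where "i \<in> phi" "x = pl s i" unfolding coset_def by blast
        thus "x \<in> S" using s pS S subalg_sub sub_pl by blast
      qed
    next
      fix s x assume s: "s \<in> S" and x: "x \<in> ?K"
      have "lbr Q (cs s) (cs x) \<in> K'" using K' s x unfolding ideal_in_def by blast
      thus "br s x \<in> ?K" using Q_br SC s x by simp
    qed
    have Knil: "\<forall>x\<in>?K. ad_nilpotent L x" using K'(2) adnil_Q by blast
    have "?K \<subseteq> ?N" using nil_props(3)[OF S Kid Knil] .
    moreover have "K' \<subseteq> cs ` ?K"
    proof
      fix X assume X: "X \<in> K'"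
      hence "X \<in> lcarr Q" using K's unfolding lsubspace_def by blast
      then obtain x where "x \<in> C" "X = cs x" using QC_cs by blast
      thus "X \<in> cs ` ?K" using X by blast
    qed
    ultimately show "K' \<subseteq> ?T" by blast
  qed
  have "nil Q (cs ` S) = ?T" unfolding nil_def[of Q "cs ` S"]
  proof (rule the_equality)
    show "ideal_in Q (cs ` S) ?T \<and> (\<forall>x\<in>?T. ad_nilpotent Q x) \<and>
      (\<forall>K. ideal_in Q (cs ` S) K \<and> (\<forall>x\<in>K. ad_nilpotent Q x) \<longrightarrow> K \<subseteq> ?T)"
      using Tid Tnil Tmax by blast
    fix J assume J: "ideal_in Q (cs ` S) J \<and> (\<forall>x\<in>J. ad_nilpotent Q x) \<and>
      (\<forall>K. ideal_in Q (cs ` S) K \<and> (\<forall>x\<in>K. ad_nilpotent Q x) \<longrightarrow> K \<subseteq> J)"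
    have "J \<subseteq> ?T" using J Tmax by blast
    moreover have "?T \<subseteq> J" using J Tid Tnil by blast
    ultimately show "J = ?T" by blast
  qed
  thus ?thesis unfolding qimg_def by simp
qed

end



context LAF begin

lemma gen_props: assumes X: "X \<subseteq> C"
  shows "subalgebra L (generated_subalgebra L X)" "X \<subseteq> generated_subalgebra L X"
proof -
  let ?F = "{T. subalgebra L T \<and> X \<subseteq> T}"
  have CF: "C \<in> ?F" using X subalg_C by blast
  have G: "generated_subalgebra L X = \<Inter>?F" unfolding generated_subalgebra_def by simp
  show "X \<subseteq> generated_subalgebra L X" unfolding G by blast
  have "lsubspace L (\<Inter>?F)"
    unfolding lsubspace_def
  proof (intro conjI ballI allI)
    show "\<Inter>?F \<subseteq> C" using CF by blast
    show "z0 \<in> \<Inter>?F" using subalg_sub sub_zero by blast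
  next
    fix a b assume "a \<in> \<Inter>?F" "b \<in> \<Inter>?F"
    thus "pl a b \<in> \<Inter>?F" using subalg_sub sub_pl by blast
  next
    fix c a assume "a \<in> \<Inter>?F"
    thus "sm c a \<in> \<Inter>?F" using subalg_sub sub_sm by blast
  qed
  moreover have "\<forall>a\<in>\<Inter>?F. \<forall>b\<in>\<Inter>?F. br a b \<in> \<Inter>?F" using subalg_br by blast
  ultimately show "subalgebra L (generated_subalgebra L X)" unfolding G subalgebra_def by blast
qed

lemma gen_min: "subalgebra M T \<Longrightarrow> X \<subseteq> T \<Longrightarrow> generated_subalgebra M X \<subseteq> T"
  unfolding generated_subalgebra_def by blast

lemma gen_sup: "X \<subseteq> generated_subalgebra M X"
  unfolding generated_subalgebra_def by blast

lemma lincomb_C: "set (map snd ys) \<subseteq> C \<Longrightarrow> lincomb L ys \<in> C"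
proof (induction ys)
  case Nil then show ?case by simp
next
  case (Cons p ys)
  obtain c v where p: "p = (c, v)" by (cases p)
  then show ?case using Cons by simp
qed

lemma part2:
  assumes H: "\<forall>S. subalgebra L S \<and> two_generated L S \<and> S \<noteq> C \<longrightarrow> triangulable L S"
    and T: "subalgebra Q T" "two_generated Q T" "T \<noteq> lcarr Q"
  shows "triangulable Q T"
proof -
  obtain A B where AB: "A \<in> lcarr Q" "B \<in> lcarr Q" "T = generated_subalgebra Q {A, B}"
    using T(2) unfolding two_generated_def by blast
  obtain a b where ab: "a \<in> C" "b \<in> C" "A = cs a" "B = cs b" using AB QC_cs by metis
  let ?S = "generated_subalgebra L {a, b}"
  have Ssub: "subalgebra L ?S" and abS: "{a, b} \<subseteq> ?S" using gen_props[of "{a, b}"] ab by auto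
  have SC: "\<And>x. x \<in> ?S \<Longrightarrow> x \<in> C" using Ssub subalg_CI by blast
  have ABT: "{A, B} \<subseteq> T" using AB gen_sup by metis
  have TS: "T \<subseteq> cs ` ?S"
  proof -
    have "subalgebra Q (cs ` ?S)" using img_subalg[OF Ssub] .
    moreover have "{A, B} \<subseteq> cs ` ?S" using abS ab by blast
    ultimately show ?thesis using gen_min AB(3) by metis
  qed
  have SneC: "?S \<noteq> C"
  proof
    assume SC': "?S = C"
    let ?S' = "{x\<in>C. cs x \<in> T}"
    have "subalgebra L ?S'" using pre_subalg[OF T(1)] .
    moreover have "{a, b} \<subseteq> ?S'" using ab ABT by auto
    ultimately have "?S \<subseteq> ?S'" using gen_min by metis
    hence "cs ` C \<subseteq> T" using SC' by blast
    moreover have "T \<subseteq> lcarr Q" using T(1) unfolding subalgebra_def lsubspace_def by blast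
    ultimately show False using T(3) unfolding Q_simps by blast
  qed
  have "two_generated L ?S" unfolding two_generated_def using ab by blast
  hence tri: "triangulable L ?S" using H Ssub SneC by blast
  let ?BL = "{br p r |p r. p \<in> ?S \<and> r \<in> ?S}"
  let ?BQ = "{lbr Q P R |P R. P \<in> T \<and> R \<in> T}"
  have key: "\<And>xs. set (map snd xs) \<subseteq> ?BQ \<Longrightarrow> \<exists>x\<in>lspan L ?BL. lincomb Q xs = cs x"
  proof -
    fix xs :: "('f \<times> 'a set) list"
    show "set (map snd xs) \<subseteq> ?BQ \<Longrightarrow> \<exists>x\<in>lspan L ?BL. lincomb Q xs = cs x"
    proof (induction xs)
      case Nil
      have "z0 \<in> lspan L ?BL" unfolding lspan_def by (intro CollectI exI[of _ "[]"]) simp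
      moreover have "lincomb Q [] = cs z0" using cs_z Q_simps by simp
      ultimately show ?case by blast
    next
      case (Cons p xs)
      obtain c V where p: "p = (c, V)" by (cases p)
      have "V \<in> ?BQ" using Cons.prems p by simp
      then obtain P R where PR: "P \<in> T" "R \<in> T" "V = lbr Q P R" by blast
      obtain pp rr where prr: "pp \<in> ?S" "rr \<in> ?S" "P = cs pp" "R = cs rr" using PR TS by blast
      have V: "V = cs (br pp rr)" using PR prr Q_br SC by simp
      obtain x where x: "x \<in> lspan L ?BL" "lincomb Q xs = cs x" using Cons by auto
      obtain ys where ys: "set (map snd ys) \<subseteq> ?BL" "x = lincomb L ys" using x(1) unfolding lspan_def by blast
      have BLC: "?BL \<subseteq> C" using SC by auto
      have xC: "x \<in> C" using ys lincomb_C BLC by blast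
      have brC: "br pp rr \<in> C" using prr SC by simp
      have "lincomb Q (p # xs) = ladd Q (lsmult Q c (cs (br pp rr))) (cs x)" using p V x by simp
      also have "\<dots> = cs (pl (sm c (br pp rr)) x)" using Q_sm Q_add brC xC by simp
      finally have e: "lincomb Q (p # xs) = cs (lincomb L ((c, br pp rr) # ys))" using ys by simp
      have "lincomb L ((c, br pp rr) # ys) \<in> lspan L ?BL"
        unfolding lspan_def using ys prr by (intro CollectI exI[of _ "(c, br pp rr) # ys"]) auto
      thus ?case using e by blast
    qed
  qed
  show ?thesis unfolding triangulable_def
  proof
    fix X assume "X \<in> lspan Q ?BQ"
    then obtain xs where xs: "set (map snd xs) \<subseteq> ?BQ" "X = lincomb Q xs" unfolding lspan_def by blast
    obtain x where x: "x \<in> lspan L ?BL" "lincomb Q xs = cs x" using key[OF xs(1)] by blast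
    have "ad_nilpotent L x" using tri x unfolding triangulable_def by blast
    moreover have "x \<in> C"
    proof -
      obtain ys where "set (map snd ys) \<subseteq> ?BL" "x = lincomb L ys" using x(1) unfolding lspan_def by blast
      moreover have "?BL \<subseteq> C" using SC by auto
      ultimately show ?thesis using lincomb_C by blast
    qed
    ultimately show "ad_nilpotent Q X" using adnil_Q xs x by simp
  qed
qed

end

theorem lemma4p5:
  fixes L :: "('f::field, 'a) liealg"
  assumes "lie_algebra L" and "finite_dim L"
  shows "(\<forall>S. subalgebra L S \<and> frattini L \<subseteq> S \<longrightarrow>
            nil (quotient L (frattini L)) (qimg L (frattini L) S)
              = qimg L (frattini L) (nil L S))
       \<and> ((\<forall>S. subalgebra L S \<and> two_generated L S \<and> S \<noteq> lcarr L \<longrightarrow> triangulable L S)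
          \<longrightarrow> (\<forall>T. subalgebra (quotient L (frattini L)) T
                   \<and> two_generated (quotient L (frattini L)) T
                   \<and> T \<noteq> lcarr (quotient L (frattini L))
                   \<longrightarrow> triangulable (quotient L (frattini L)) T))"
proof -
  interpret LAF L by unfold_locales (rule assms)+
  show ?thesis using part1 part2 by blast
qed



end
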